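(* Let $H\in(1/2,1)$, $T>0$, and let $\Gamma^H_T:L_2[0,T]\to L_2[0,T]$ be $\Gamma^H_Tf(t)=\int_0^T\frac{H(2H-1)}{|t-s|^{2-2H}}f(s)\,ds$. Then $\Gamma^H_T$ is bounded, self-adjoint and positive semidefinite, the operator $\Gamma_T=I+\Gamma^H_T$ is invertible on $L_2[0,T]$, and the function $h_T=\Gamma_T^{-1}\mathbf 1$ is given by the $L_2$-convergent series $$h_T=\sum_{k=0}^\infty\frac{\big(\tfrac12\|\Gamma^H_T\|\,I-\Gamma^H_T\big)^k\mathbf 1}{\big(1+\tfrac12\|\Gamma^H_T\|\big)^{k+1}}.$$ Consequently, for the model $X_t=\theta t+W_t+B^H_t$ with $W$ a standard Wiener process and $B^H$ an independent fractional Brownian motion with Hurst index $H$, there is $h_T\in L_2[0,T]$ with $\Gamma_Th_T=\mathbf 1$.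
   Context: $\mathbf 1$ denotes the constant function $1$ on $[0,T]$, $I$ the identity operator, and $\|\cdot\|$ the operator norm on $L_2[0,T]$. A fractional Brownian motion with Hurst index $H$ is a centered Gaussian process with covariance $\frac12(t^{2H}+s^{2H}-|t-s|^{2H})$; for $W+B^H$ the operator $\Gamma_T=I+\Gamma^H_T$ is the one satisfying $\mathbb{E}[\int_0^Tf\,d(W+B^H)\int_0^Tg\,d(W+B^H)]=\int_0^T(\Gamma_Tf)(t)g(t)\,dt$. *)

theory Defs
  imports "HOL-Analysis.Analysis"
begin

text \<open>Elements of L_2[0,T] are represented by real functions on the real line that are
Borel measurable and square integrable on [0,T]; equalities in L_2 are a.e. on [0,T].\<close>

definition L2space :: "real \<Rightarrow> (real \<Rightarrow> real) set" where
  "L2space T = {f. set_borel_measurable lborel {0..T} f \<and>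
                   set_integrable lborel {0..T} (\<lambda>t. (f t)\<^sup>2)}"

definition L2inner :: "real \<Rightarrow> (real \<Rightarrow> real) \<Rightarrow> (real \<Rightarrow> real) \<Rightarrow> real" where
  "L2inner T f g = (LINT t:{0..T}|lborel. f t * g t)"

definition L2norm :: "real \<Rightarrow> (real \<Rightarrow> real) \<Rightarrow> real" where
  "L2norm T f = sqrt (LINT t:{0..T}|lborel. (f t)\<^sup>2)"

definition L2eq :: "real \<Rightarrow> (real \<Rightarrow> real) \<Rightarrow> (real \<Rightarrow> real) \<Rightarrow> bool" where
  "L2eq T f g \<longleftrightarrow> (AE t in lborel. t \<in> {0..T} \<longrightarrow> f t = g t)"

definition GammaH :: "real \<Rightarrow> real \<Rightarrow> (real \<Rightarrow> real) \<Rightarrow> (real \<Rightarrow> real)" where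
  "GammaH H T f = (\<lambda>t. LINT s:{0..T}|lborel. H * (2 * H - 1) / \<bar>t - s\<bar> powr (2 - 2 * H) * f s)"

definition GammaT :: "real \<Rightarrow> real \<Rightarrow> (real \<Rightarrow> real) \<Rightarrow> (real \<Rightarrow> real)" where
  "GammaT H T f = (\<lambda>t. f t + GammaH H T f t)"

definition L2opnorm :: "real \<Rightarrow> ((real \<Rightarrow> real) \<Rightarrow> (real \<Rightarrow> real)) \<Rightarrow> real" where
  "L2opnorm T A = Sup {L2norm T (A f) | f. f \<in> L2space T \<and> L2norm T f \<le> 1}"

definition hpartial :: "real \<Rightarrow> real \<Rightarrow> nat \<Rightarrow> (real \<Rightarrow> real)" where
  "hpartial H T n = (let c = L2opnorm T (GammaH H T) / 2;
                         A = (\<lambda>f t. c * f t - GammaH H T f t)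
                     in (\<lambda>t. \<Sum>k<n. (A ^^ k) (\<lambda>_. 1) t / (1 + c) ^ (k + 1)))"

end

theory Submission
  imports Defs
begin

definition sqi :: "'a measure \<Rightarrow> ('a \<Rightarrow> real) \<Rightarrow> bool" where
  "sqi M f \<longleftrightarrow> f \<in> borel_measurable M \<and> integrable M (\<lambda>x. (f x)\<^sup>2)"
definition nrm :: "'a measure \<Rightarrow> ('a \<Rightarrow> real) \<Rightarrow> real" where
  "nrm M f = sqrt (\<integral>x. (f x)\<^sup>2 \<partial>M)"
definition inn :: "'a measure \<Rightarrow> ('a \<Rightarrow> real) \<Rightarrow> ('a \<Rightarrow> real) \<Rightarrow> real" where
  "inn M f g = (\<integral>x. f x * g x \<partial>M)"

lemma sqi_meas: "sqi M f \<Longrightarrow> f \<in> borel_measurable M" by (simp add: sqi_def)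
lemma sqi_int2: "sqi M f \<Longrightarrow> integrable M (\<lambda>x. (f x)\<^sup>2)" by (simp add: sqi_def)

lemma sqi_mult_integrable:
  assumes "sqi M f" "sqi M g" shows "integrable M (\<lambda>x. f x * g x)"
proof (rule Bochner_Integration.integrable_bound)
  show "integrable M (\<lambda>x. (f x)\<^sup>2 + (g x)\<^sup>2)" using assms by (auto simp: sqi_def)
  show "(\<lambda>x. f x * g x) \<in> borel_measurable M" using assms by (auto simp: sqi_def)
  show "AE x in M. norm (f x * g x) \<le> norm ((f x)\<^sup>2 + (g x)\<^sup>2)"
  proof (rule AE_I2)
    fix x
    have "0 \<le> (\<bar>f x\<bar> - \<bar>g x\<bar>)\<^sup>2" by simp
    then have "2 * (\<bar>f x\<bar> * \<bar>g x\<bar>) \<le> (f x)\<^sup>2 + (g x)\<^sup>2"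
      by (simp add: power2_eq_square algebra_simps abs_mult_self_eq)
    moreover have "\<bar>f x\<bar> * \<bar>g x\<bar> \<ge> 0" by simp
    ultimately have "\<bar>f x\<bar> * \<bar>g x\<bar> \<le> (f x)\<^sup>2 + (g x)\<^sup>2" by linarith
    then have "\<bar>f x * g x\<bar> \<le> (f x)\<^sup>2 + (g x)\<^sup>2" by (simp add: abs_mult)
    then show "norm (f x * g x) \<le> norm ((f x)\<^sup>2 + (g x)\<^sup>2)" by simp
  qed
qed

lemma sqi_add: assumes "sqi M f" "sqi M g" shows "sqi M (\<lambda>x. f x + g x)"
proof -
  have "integrable M (\<lambda>x. (f x)\<^sup>2 + 2 * (f x * g x) + (g x)\<^sup>2)"
    using assms sqi_mult_integrable[OF assms] by (auto simp: sqi_def)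
  then show ?thesis using assms by (simp add: sqi_def power2_sum algebra_simps borel_measurable_add)
qed

lemma sqi_cmult: assumes "sqi M f" shows "sqi M (\<lambda>x. c * f x)"
  using assms by (simp add: sqi_def power_mult_distrib borel_measurable_times)

lemma sqi_divide: assumes "sqi M f" shows "sqi M (\<lambda>x. f x / c)"
  using sqi_cmult[OF assms, of "1/c"] by simp

lemma sqi_minus: assumes "sqi M f" shows "sqi M (\<lambda>x. - f x)"
  using sqi_cmult[OF assms, of "-1"] by simp

lemma sqi_diff: assumes "sqi M f" "sqi M g" shows "sqi M (\<lambda>x. f x - g x)"
  using sqi_add[OF assms(1) sqi_minus[OF assms(2)]] by simp

lemma sqi_zero: "sqi M (\<lambda>x. 0)" by (simp add: sqi_def)

lemma sqi_sum: "(\<And>i. i \<in> I \<Longrightarrow> sqi M (f i)) \<Longrightarrow> sqi M (\<lambda>x. \<Sum>i\<in>I. f i x)"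
proof (induction I rule: infinite_finite_induct)
  case (insert i I) then show ?case using sqi_add[of M "f i" "\<lambda>x. \<Sum>i\<in>I. f i x"] by auto
qed (auto simp: sqi_zero)

lemma (in finite_measure) sqi_const: "sqi M (\<lambda>x. c)" by (simp add: sqi_def)

lemma sqi_cong_AE: "sqi M f \<Longrightarrow> g \<in> borel_measurable M \<Longrightarrow> AE x in M. f x = g x \<Longrightarrow> sqi M g"
  unfolding sqi_def by (auto intro!: integrable_cong_AE_imp[of M "\<lambda>x. (f x)\<^sup>2"] elim: AE_mp)

lemma nrm_nonneg: "nrm M f \<ge> 0" by (simp add: nrm_def integral_nonneg)

lemma nrm_sq: "(nrm M f)\<^sup>2 = (\<integral>x. (f x)\<^sup>2 \<partial>M)"
  by (simp add: nrm_def integral_nonneg)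

lemma inn_self: "inn M f f = (nrm M f)\<^sup>2"
proof -
  have "inn M f f = (\<integral>x. (f x)\<^sup>2 \<partial>M)" by (simp add: inn_def power2_eq_square)
  then show ?thesis by (simp add: nrm_sq)
qed

lemma inn_sym: "inn M f g = inn M g f" by (simp add: inn_def mult.commute)

lemma inn_add: "sqi M f \<Longrightarrow> sqi M g \<Longrightarrow> sqi M h \<Longrightarrow> inn M (\<lambda>x. f x + g x) h = inn M f h + inn M g h"
  by (simp add: inn_def distrib_right sqi_mult_integrable)

lemma inn_diff: "sqi M f \<Longrightarrow> sqi M g \<Longrightarrow> sqi M h \<Longrightarrow> inn M (\<lambda>x. f x - g x) h = inn M f h - inn M g h"
  by (simp add: inn_def left_diff_distrib sqi_mult_integrable)

lemma inn_cmult: "inn M (\<lambda>x. c * f x) h = c * inn M f h"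
  by (simp add: inn_def mult.assoc)

lemma inn_cong_AE: "f \<in> borel_measurable M \<Longrightarrow> f' \<in> borel_measurable M \<Longrightarrow> g \<in> borel_measurable M \<Longrightarrow> g' \<in> borel_measurable M \<Longrightarrow>
  AE x in M. f x = f' x \<Longrightarrow> AE x in M. g x = g' x \<Longrightarrow> inn M f g = inn M f' g'"
  unfolding inn_def by (rule integral_cong_AE) (auto elim: AE_mp)

lemma nrm_cong_AE: "f \<in> borel_measurable M \<Longrightarrow> f' \<in> borel_measurable M \<Longrightarrow> AE x in M. f x = f' x \<Longrightarrow> nrm M f = nrm M f'"
  unfolding nrm_def by (subst integral_cong_AE[of "\<lambda>x. (f x)\<^sup>2" M "\<lambda>x. (f' x)\<^sup>2"]) (auto elim: AE_mp)

lemma nrm_cmult: "nrm M (\<lambda>x. c * f x) = \<bar>c\<bar> * nrm M f"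
  by (simp add: nrm_def power_mult_distrib real_sqrt_mult)

lemma inn_expand:
  assumes "sqi M f" "sqi M g"
  shows "(nrm M (\<lambda>x. f x + a * g x))\<^sup>2 = (nrm M f)\<^sup>2 + 2 * a * inn M f g + a\<^sup>2 * (nrm M g)\<^sup>2"
proof -
  have i: "integrable M (\<lambda>x. f x * g x)" using sqi_mult_integrable[OF assms] .
  have "(\<integral>x. (f x + a * g x)\<^sup>2 \<partial>M) = (\<integral>x. (f x)\<^sup>2 + (2 * a * (f x * g x) + a\<^sup>2 * (g x)\<^sup>2) \<partial>M)"
    by (rule Bochner_Integration.integral_cong) (auto simp: power2_sum power_mult_distrib algebra_simps)
  also have "\<dots> = (\<integral>x. (f x)\<^sup>2 \<partial>M) + (2 * a * (\<integral>x. f x * g x \<partial>M) + a\<^sup>2 * (\<integral>x. (g x)\<^sup>2 \<partial>M))"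
    using assms i by (simp add: sqi_def)
  finally show ?thesis by (simp add: nrm_sq inn_def)
qed

lemma quad_disc:
  fixes a b c :: real
  assumes "\<And>t. 0 \<le> a + 2 * t * b + t\<^sup>2 * c"
  shows "b\<^sup>2 \<le> a * c"
proof (cases "c = 0")
  case True
  have "b = 0"
  proof (rule ccontr)
    assume "b \<noteq> 0"
    from assms[of "- (a + 1) / (2 * b)"] True \<open>b \<noteq> 0\<close> show False by (simp add: field_simps)
  qed
  then show ?thesis using True by simp
next
  case False
  have c: "c > 0"
  proof (rule ccontr)
    assume "\<not> c > 0" then have "c < 0" using False by simp
    define t where "t = sqrt ((\<bar>a\<bar> + 1) / (- c))"
    have t2: "t\<^sup>2 = (\<bar>a\<bar> + 1) / (- c)" unfolding t_def using \<open>c<0\<close> by (simp add: divide_nonneg_neg)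
    have "0 \<le> a + 2 * t * b + t\<^sup>2 * c" "0 \<le> a + 2 * (-t) * b + (-t)\<^sup>2 * c" by (rule assms)+
    then have "0 \<le> 2 * a + 2 * (t\<^sup>2 * c)" by simp
    also have "t\<^sup>2 * c = - (\<bar>a\<bar> + 1)" using t2 \<open>c<0\<close> by simp
    finally show False by simp
  qed
  from assms[of "- b / c"] c have "0 \<le> a - b\<^sup>2 / c" by (simp add: field_simps power2_eq_square)
  then show ?thesis using c by (simp add: field_simps)
qed

lemma cauchy_schwarz:
  assumes "sqi M f" "sqi M g" shows "\<bar>inn M f g\<bar> \<le> nrm M f * nrm M g"
proof -
  have "(inn M f g)\<^sup>2 \<le> (nrm M f)\<^sup>2 * (nrm M g)\<^sup>2"
    by (rule quad_disc) (metis inn_expand[OF assms] zero_le_power2)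
  then have "(inn M f g)\<^sup>2 \<le> (nrm M f * nrm M g)\<^sup>2" by (simp add: power_mult_distrib)
  then have "\<bar>inn M f g\<bar>\<^sup>2 \<le> (nrm M f * nrm M g)\<^sup>2" by simp
  from power2_le_imp_le[OF this] show ?thesis using nrm_nonneg[of M f] nrm_nonneg[of M g] by simp
qed

lemma nrm_triangle:
  assumes "sqi M f" "sqi M g" shows "nrm M (\<lambda>x. f x + g x) \<le> nrm M f + nrm M g"
proof -
  have "(nrm M (\<lambda>x. f x + g x))\<^sup>2 = (nrm M f)\<^sup>2 + 2 * inn M f g + (nrm M g)\<^sup>2"
    using inn_expand[OF assms, of 1] by simp
  also have "\<dots> \<le> (nrm M f)\<^sup>2 + 2 * (nrm M f * nrm M g) + (nrm M g)\<^sup>2"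
    using cauchy_schwarz[OF assms] by simp
  also have "\<dots> = (nrm M f + nrm M g)\<^sup>2" by (simp add: power2_sum)
  finally show ?thesis using nrm_nonneg[of M f] nrm_nonneg[of M g]
    by (meson add_nonneg_nonneg power2_le_imp_le)
qed

lemma nrm_triangle_diff:
  assumes "sqi M f" "sqi M g" shows "nrm M (\<lambda>x. f x - g x) \<le> nrm M f + nrm M g"
  using nrm_triangle[OF assms(1) sqi_minus[OF assms(2)]] nrm_cmult[of M "-1" g] by simp

lemma nrm_eq_0:
  assumes "sqi M f" shows "nrm M f = 0 \<longleftrightarrow> (AE x in M. f x = 0)"
proof -
  have "nrm M f = 0 \<longleftrightarrow> (\<integral>x. (f x)\<^sup>2 \<partial>M) = 0" by (simp add: nrm_def)
  also have "\<dots> \<longleftrightarrow> (AE x in M. (f x)\<^sup>2 = 0)"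
    using assms by (intro integral_nonneg_eq_0_iff_AE) (auto simp: sqi_def)
  finally show ?thesis by simp
qed

lemma nrm_sum: "(\<And>i. i \<in> I \<Longrightarrow> sqi M (f i)) \<Longrightarrow> nrm M (\<lambda>x. \<Sum>i\<in>I. f i x) \<le> (\<Sum>i\<in>I. nrm M (f i))"
proof (induction I rule: infinite_finite_induct)
  case (insert i I)
  have "nrm M (\<lambda>x. \<Sum>i\<in>insert i I. f i x) = nrm M (\<lambda>x. f i x + (\<Sum>i\<in>I. f i x))"
    using insert by simp
  also have "\<dots> \<le> nrm M (f i) + nrm M (\<lambda>x. \<Sum>i\<in>I. f i x)"
    using insert by (intro nrm_triangle sqi_sum) auto
  finally show ?case using insert by simp
qed (auto simp: nrm_def)


definition Kop :: "'a measure \<Rightarrow> ('a \<Rightarrow> 'a \<Rightarrow> real) \<Rightarrow> ('a \<Rightarrow> real) \<Rightarrow> ('a \<Rightarrow> real)" where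
  "Kop M k f = (\<lambda>t. \<integral>s. k t s * f s \<partial>M)"

locale kern = finite_measure M for M :: "'a measure" +
  fixes k :: "'a \<Rightarrow> 'a \<Rightarrow> real" and K :: real
  assumes k_meas[measurable]: "(\<lambda>x. k (fst x) (snd x)) \<in> borel_measurable (M \<Otimes>\<^sub>M M)"
  and k_nonneg: "0 \<le> k t s"
  and k_sym: "k t s = k s t"
  and k_bound: "t \<in> space M \<Longrightarrow> (\<integral>\<^sup>+s. k t s \<partial>M) \<le> ennreal K"
  and K_nonneg: "0 \<le> K"
begin

interpretation P: pair_sigma_finite M M ..

lemma k_meas2[measurable]: "t \<in> space M \<Longrightarrow> k t \<in> borel_measurable M"
  using measurable_Pair2[OF k_meas] by simp

definition F :: "('a \<Rightarrow> real) \<Rightarrow> 'a \<Rightarrow> ennreal" where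
  "F f t = (\<integral>\<^sup>+s. ennreal (k t s * \<bar>f s\<bar>) \<partial>M)"

lemma F_meas[measurable]: assumes [measurable]: "f \<in> borel_measurable M" shows "F f \<in> borel_measurable M"
  unfolding F_def by measurable

lemma F_sq_bound:
  assumes f[measurable]: "f \<in> borel_measurable M" and t: "t \<in> space M"
  shows "(F f t)\<^sup>2 \<le> ennreal K * (\<integral>\<^sup>+s. ennreal (k t s * (f s)\<^sup>2) \<partial>M)"
proof -
  have "(F f t)\<^sup>2 = (\<integral>\<^sup>+s. ennreal (sqrt (k t s)) * ennreal (sqrt (k t s) * \<bar>f s\<bar>) \<partial>M)\<^sup>2"
    unfolding F_def
    by (rule arg_cong[where f="\<lambda>x. x\<^sup>2"], rule nn_integral_cong)
       (simp add: ennreal_mult[symmetric] k_nonneg mult.assoc[symmetric] real_sqrt_mult[symmetric])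
  also have "\<dots> \<le> (\<integral>\<^sup>+s. (ennreal (sqrt (k t s)))\<^sup>2 \<partial>M) * (\<integral>\<^sup>+s. (ennreal (sqrt (k t s) * \<bar>f s\<bar>))\<^sup>2 \<partial>M)"
    using t by (intro Cauchy_Schwarz_nn_integral) measurable
  also have "\<dots> = (\<integral>\<^sup>+s. k t s \<partial>M) * (\<integral>\<^sup>+s. ennreal (k t s * (f s)\<^sup>2) \<partial>M)"
    by (intro arg_cong2[where f="(*)"] nn_integral_cong)
       (simp_all add: ennreal_power k_nonneg power_mult_distrib)
  also have "\<dots> \<le> ennreal K * (\<integral>\<^sup>+s. ennreal (k t s * (f s)\<^sup>2) \<partial>M)"
    using k_bound[OF t] by (intro mult_right_mono) auto
  finally show ?thesis .
qed

lemma F_sq_int: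
  assumes f[measurable]: "f \<in> borel_measurable M"
  shows "(\<integral>\<^sup>+t. (F f t)\<^sup>2 \<partial>M) \<le> ennreal (K * K) * (\<integral>\<^sup>+s. ennreal ((f s)\<^sup>2) \<partial>M)"
proof -
  have "(\<integral>\<^sup>+t. (F f t)\<^sup>2 \<partial>M) \<le> (\<integral>\<^sup>+t. ennreal K * (\<integral>\<^sup>+s. ennreal (k t s * (f s)\<^sup>2) \<partial>M) \<partial>M)"
    by (intro nn_integral_mono F_sq_bound) auto
  also have "\<dots> = ennreal K * (\<integral>\<^sup>+t. (\<integral>\<^sup>+s. ennreal (k t s * (f s)\<^sup>2) \<partial>M) \<partial>M)"
    by (rule nn_integral_cmult) measurable
  also have "(\<integral>\<^sup>+t. (\<integral>\<^sup>+s. ennreal (k t s * (f s)\<^sup>2) \<partial>M) \<partial>M) = (\<integral>\<^sup>+s. (\<integral>\<^sup>+t. ennreal (k t s * (f s)\<^sup>2) \<partial>M) \<partial>M)"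
    by (rule P.Fubini'[symmetric]) measurable
  also have "\<dots> = (\<integral>\<^sup>+s. ennreal ((f s)\<^sup>2) * (\<integral>\<^sup>+t. k s t \<partial>M) \<partial>M)"
    by (intro nn_integral_cong)
       (simp add: nn_integral_cmult[symmetric] ennreal_mult'[symmetric] k_nonneg k_sym mult.commute)
  also have "\<dots> \<le> (\<integral>\<^sup>+s. ennreal ((f s)\<^sup>2) * ennreal K \<partial>M)"
    by (intro nn_integral_mono mult_left_mono k_bound) auto
  also have "\<dots> = ennreal K * (\<integral>\<^sup>+s. ennreal ((f s)\<^sup>2) \<partial>M)"
    by (subst nn_integral_cmult[symmetric]) (auto simp: mult.commute)
  finally show ?thesis
    by (simp add: ennreal_mult K_nonneg mult.assoc mult_left_mono)
qed

lemma sqi_nn: "sqi M f \<Longrightarrow> (\<integral>\<^sup>+s. ennreal ((f s)\<^sup>2) \<partial>M) = ennreal ((nrm M f)\<^sup>2)"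
  unfolding nrm_sq by (rule nn_integral_eq_integral) (auto simp: sqi_def)

lemma F_finite_AE:
  assumes "sqi M f" shows "AE t in M. F f t < \<infinity>"
proof -
  note [measurable] = sqi_meas[OF assms]
  have "(\<integral>\<^sup>+t. (F f t)\<^sup>2 \<partial>M) \<noteq> \<infinity>"
    using F_sq_int[of f] sqi_nn[OF assms] by (auto simp: ennreal_mult_eq_top_iff top_unique)
  then have "AE t in M. (F f t)\<^sup>2 \<noteq> \<infinity>" by (intro nn_integral_PInf_AE) auto
  then show ?thesis by (auto simp: top.not_eq_extremum power_less_top_ennreal)
qed

lemma integrable_k_AE:
  assumes "sqi M f" shows "AE t in M. integrable M (\<lambda>s. k t s * f s)"
  using F_finite_AE[OF assms] AE_space
proof eventually_elim
  case (elim t)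
  note [measurable] = sqi_meas[OF assms]
  show ?case unfolding integrable_iff_bounded
    using elim by (auto simp: F_def abs_mult k_nonneg)
qed

lemma Kop_meas[measurable]: assumes [measurable]: "f \<in> borel_measurable M" shows "Kop M k f \<in> borel_measurable M"
  unfolding Kop_def by measurable

lemma Kop_le_F: "f \<in> borel_measurable M \<Longrightarrow> t \<in> space M \<Longrightarrow> ennreal \<bar>Kop M k f t\<bar> \<le> F f t"
proof (cases "integrable M (\<lambda>s. k t s * f s)")
  case True
  then show ?thesis unfolding Kop_def F_def
    using integral_norm_bound_ennreal[OF True] by (simp add: abs_mult k_nonneg)
next
  case False
  then show ?thesis by (simp add: Kop_def not_integrable_integral_eq)
qed

lemma Kop_sqi:
  assumes "sqi M f"
  shows "sqi M (Kop M k f)" "nrm M (Kop M k f) \<le> K * nrm M f"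
proof -
  note [measurable] = sqi_meas[OF assms]
  have "(\<integral>\<^sup>+t. ennreal ((Kop M k f t)\<^sup>2) \<partial>M) \<le> (\<integral>\<^sup>+t. (F f t)\<^sup>2 \<partial>M)"
  proof (intro nn_integral_mono)
    fix t assume t: "t \<in> space M"
    have "ennreal ((Kop M k f t)\<^sup>2) = (ennreal \<bar>Kop M k f t\<bar>)\<^sup>2"
      by (simp add: ennreal_power)
    also have "\<dots> \<le> (F f t)\<^sup>2" using Kop_le_F[of f t] t by (intro power_mono) auto
    finally show "ennreal ((Kop M k f t)\<^sup>2) \<le> (F f t)\<^sup>2" .
  qed
  also have "\<dots> \<le> ennreal (K * K) * ennreal ((nrm M f)\<^sup>2)"
    using F_sq_int[of f] sqi_nn[OF assms] by simp
  finally have le: "(\<integral>\<^sup>+t. ennreal ((Kop M k f t)\<^sup>2) \<partial>M) \<le> ennreal (K * K * (nrm M f)\<^sup>2)"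
    by (simp add: ennreal_mult)
  have int: "integrable M (\<lambda>t. (Kop M k f t)\<^sup>2)"
    unfolding integrable_iff_bounded using order.strict_trans1[OF le ennreal_less_top] by simp
  then show "sqi M (Kop M k f)" by (simp add: sqi_def)
  have "ennreal ((nrm M (Kop M k f))\<^sup>2) = (\<integral>\<^sup>+t. ennreal ((Kop M k f t)\<^sup>2) \<partial>M)"
    using sqi_nn[of "Kop M k f"] int by (simp add: sqi_def)
  also note le
  finally have "ennreal ((nrm M (Kop M k f))\<^sup>2) \<le> ennreal (K * K * (nrm M f)\<^sup>2)" .
  then have "(nrm M (Kop M k f))\<^sup>2 \<le> K * K * (nrm M f)\<^sup>2"
    by (subst (asm) ennreal_le_iff) (auto simp: K_nonneg)
  then have "(nrm M (Kop M k f))\<^sup>2 \<le> (K * nrm M f)\<^sup>2"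
    by (simp add: power_mult_distrib power2_eq_square mult_ac)
  from power2_le_imp_le[OF this] show "nrm M (Kop M k f) \<le> K * nrm M f"
    using K_nonneg nrm_nonneg[of M f] by simp
qed

lemma Kop_cmult: "Kop M k (\<lambda>x. c * f x) = (\<lambda>t. c * Kop M k f t)"
  unfolding Kop_def by (simp add: mult.left_commute)

lemma Kop_add_AE:
  assumes "sqi M f" "sqi M g"
  shows "AE t in M. Kop M k (\<lambda>x. f x + g x) t = Kop M k f t + Kop M k g t"
  using integrable_k_AE[OF assms(1)] integrable_k_AE[OF assms(2)]
  by eventually_elim (simp add: Kop_def distrib_left)

lemma Kop_diff_AE:
  assumes "sqi M f" "sqi M g"
  shows "AE t in M. Kop M k (\<lambda>x. f x - g x) t = Kop M k f t - Kop M k g t"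
  using integrable_k_AE[OF assms(1)] integrable_k_AE[OF assms(2)]
  by eventually_elim (simp add: Kop_def right_diff_distrib)

lemma Kop_cong_AE:
  assumes "f \<in> borel_measurable M" "g \<in> borel_measurable M" "AE x in M. f x = g x" "t \<in> space M"
  shows "Kop M k f t = Kop M k g t"
proof -
  note [measurable] = assms(1,2)
  show ?thesis unfolding Kop_def using assms(3,4)
    by (intro integral_cong_AE) (auto elim: AE_mp)
qed

lemma prod_integrable:
  assumes "sqi M f" "sqi M g"
  shows "integrable (M \<Otimes>\<^sub>M M) (\<lambda>x. k (fst x) (snd x) * f (snd x) * g (fst x))"
proof -
  note [measurable] = sqi_meas[OF assms(1)] sqi_meas[OF assms(2)]
  have "(\<integral>\<^sup>+x. ennreal (norm (k (fst x) (snd x) * f (snd x) * g (fst x))) \<partial>(M \<Otimes>\<^sub>M M))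
      = (\<integral>\<^sup>+t. (\<integral>\<^sup>+s. ennreal (norm (k t s * f s * g t)) \<partial>M) \<partial>M)"
  proof -
    have meas: "(\<lambda>x. ennreal (norm (k (fst x) (snd x) * f (snd x) * g (fst x)))) \<in> borel_measurable (M \<Otimes>\<^sub>M M)"
      by measurable
    from nn_integral_fst[OF meas] show ?thesis by simp
  qed
  also have "\<dots> = (\<integral>\<^sup>+t. ennreal \<bar>g t\<bar> * F f t \<partial>M)"
    unfolding F_def
    by (intro nn_integral_cong, subst nn_integral_cmult[symmetric])
       (auto simp: abs_mult k_nonneg ennreal_mult[symmetric] mult_ac intro!: nn_integral_cong)
  also have "\<dots> < \<infinity>"
  proof -
    have "(\<integral>\<^sup>+t. ennreal \<bar>g t\<bar> * F f t \<partial>M)\<^sup>2 \<le> (\<integral>\<^sup>+t. (ennreal \<bar>g t\<bar>)\<^sup>2 \<partial>M) * (\<integral>\<^sup>+t. (F f t)\<^sup>2 \<partial>M)"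
      by (rule Cauchy_Schwarz_nn_integral) measurable
    also have "(\<integral>\<^sup>+t. (ennreal \<bar>g t\<bar>)\<^sup>2 \<partial>M) = ennreal ((nrm M g)\<^sup>2)"
      using sqi_nn[OF assms(2)] by (simp add: ennreal_power)
    also have "ennreal ((nrm M g)\<^sup>2) * (\<integral>\<^sup>+t. (F f t)\<^sup>2 \<partial>M) \<le> ennreal ((nrm M g)\<^sup>2) * (ennreal (K * K) * ennreal ((nrm M f)\<^sup>2))"
      using F_sq_int[of f] sqi_nn[OF assms(1)] by (intro mult_left_mono) auto
    also have "\<dots> < \<infinity>" by (simp add: ennreal_mult_less_top)
    finally show ?thesis by (simp add: power_less_top_ennreal)
  qed
  finally have fin: "(\<integral>\<^sup>+x. ennreal (norm (k (fst x) (snd x) * f (snd x) * g (fst x))) \<partial>(M \<Otimes>\<^sub>M M)) < \<infinity>" .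
  show ?thesis unfolding integrable_iff_bounded
  proof
    show "(\<lambda>x. k (fst x) (snd x) * f (snd x) * g (fst x)) \<in> borel_measurable (M \<Otimes>\<^sub>M M)" by measurable
  qed (rule fin)
qed

lemma self_adjoint:
  assumes "sqi M f" "sqi M g"
  shows "inn M (Kop M k f) g = inn M f (Kop M k g)"
proof -
  have int: "integrable (M \<Otimes>\<^sub>M M) (case_prod (\<lambda>t s. k t s * f s * g t))"
    using prod_integrable[OF assms] by (simp add: case_prod_beta')
  have "inn M (Kop M k f) g = (\<integral>t. (\<integral>s. k t s * f s * g t \<partial>M) \<partial>M)"
    unfolding inn_def Kop_def by (simp add: integral_mult_left_zero)
  also have "\<dots> = (\<integral>s. (\<integral>t. k t s * f s * g t \<partial>M) \<partial>M)"
    by (rule P.Fubini_integral[symmetric, OF int])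
  also have "\<dots> = (\<integral>s. f s * (\<integral>t. k s t * g t \<partial>M) \<partial>M)"
  proof (rule Bochner_Integration.integral_cong[OF refl])
    fix s
    have "(\<integral>t. k t s * f s * g t \<partial>M) = (\<integral>t. f s * (k s t * g t) \<partial>M)"
      by (rule Bochner_Integration.integral_cong[OF refl]) (simp add: k_sym[of _ s])
    then show "(\<integral>t. k t s * f s * g t \<partial>M) = f s * (\<integral>t. k s t * g t \<partial>M)"
      by simp
  qed
  also have "\<dots> = inn M f (Kop M k g)"
    unfolding inn_def Kop_def ..
  finally show ?thesis .
qed

lemma quad_form:
  "inn M (Kop M k f) f = (\<integral>t. (\<integral>s. k t s * f s * f t \<partial>M) \<partial>M)"
  unfolding inn_def Kop_def by (simp add: integral_mult_left_zero)

end

lemma nrm_abs: "nrm M (\<lambda>x. \<bar>f x\<bar>) = nrm M f" by (simp add: nrm_def)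
lemma sqi_abs: "sqi M f \<Longrightarrow> sqi M (\<lambda>x. \<bar>f x\<bar>)" by (simp add: sqi_def borel_measurable_abs)

lemma W_bound:
  assumes v: "\<And>k. sqi M (v k)" and s: "summable (\<lambda>k. nrm M (v k))"
  shows "(\<integral>\<^sup>+t. (SUP N. ennreal ((\<Sum>k<N. \<bar>v k t\<bar>)\<^sup>2)) \<partial>M) \<le> ennreal ((\<Sum>k. nrm M (v k))\<^sup>2)"
proof -
  note [measurable] = sqi_meas[OF v]
  have inc: "incseq (\<lambda>N t. ennreal ((\<Sum>k<N. \<bar>v k t\<bar>)\<^sup>2))"
    by (intro incseq_SucI le_funI ennreal_leI power_mono) (auto intro: sum_nonneg)
  have "(\<integral>\<^sup>+t. (SUP N. ennreal ((\<Sum>k<N. \<bar>v k t\<bar>)\<^sup>2)) \<partial>M) = (SUP N. (\<integral>\<^sup>+t. ennreal ((\<Sum>k<N. \<bar>v k t\<bar>)\<^sup>2) \<partial>M))"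
    by (rule nn_integral_monotone_convergence_SUP[OF inc]) measurable
  also have "\<dots> \<le> ennreal ((\<Sum>k. nrm M (v k))\<^sup>2)"
  proof (rule SUP_least)
    fix N
    have sq: "sqi M (\<lambda>t. \<Sum>k<N. \<bar>v k t\<bar>)" by (intro sqi_sum sqi_abs v)
    have "(\<integral>\<^sup>+t. ennreal ((\<Sum>k<N. \<bar>v k t\<bar>)\<^sup>2) \<partial>M) = ennreal ((nrm M (\<lambda>t. \<Sum>k<N. \<bar>v k t\<bar>))\<^sup>2)"
      unfolding nrm_sq by (rule nn_integral_eq_integral) (use sq in \<open>auto simp: sqi_def\<close>)
    also have "\<dots> \<le> ennreal ((\<Sum>k. nrm M (v k))\<^sup>2)"
    proof (intro ennreal_leI power_mono)
      have "nrm M (\<lambda>t. \<Sum>k<N. \<bar>v k t\<bar>) \<le> (\<Sum>k<N. nrm M (\<lambda>t. \<bar>v k t\<bar>))"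
        by (intro nrm_sum sqi_abs v)
      also have "\<dots> = (\<Sum>k<N. nrm M (v k))" by (simp add: nrm_abs)
      also have "\<dots> \<le> (\<Sum>k. nrm M (v k))" by (intro sum_le_suminf s) (auto simp: nrm_nonneg)
      finally show "nrm M (\<lambda>t. \<Sum>k<N. \<bar>v k t\<bar>) \<le> (\<Sum>k. nrm M (v k))" .
    qed (simp add: nrm_nonneg)
    finally show "(\<integral>\<^sup>+t. ennreal ((\<Sum>k<N. \<bar>v k t\<bar>)\<^sup>2) \<partial>M) \<le> ennreal ((\<Sum>k. nrm M (v k))\<^sup>2)" .
  qed
  finally show ?thesis .
qed

lemma W_point:
  fixes v :: "nat \<Rightarrow> real"
  assumes s: "summable (\<lambda>k. \<bar>v k\<bar>)"
  shows "ennreal ((\<Sum>k. v k)\<^sup>2) \<le> (SUP N. ennreal ((\<Sum>k<N. \<bar>v k\<bar>)\<^sup>2))"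
proof (cases "(SUP N. ennreal ((\<Sum>k<N. \<bar>v k\<bar>)\<^sup>2)) = \<infinity>")
  case True then show ?thesis by (simp only: True infinity_ennreal_def top_greatest)
next
  case False
  define R where "R = enn2real (SUP N. ennreal ((\<Sum>k<N. \<bar>v k\<bar>)\<^sup>2))"
  have RS: "ennreal R = (SUP N. ennreal ((\<Sum>k<N. \<bar>v k\<bar>)\<^sup>2))"
    unfolding R_def by (rule ennreal_enn2real) (use False in \<open>simp only: less_top[symmetric] infinity_ennreal_def not_False_eq_True\<close>)
  have R0: "R \<ge> 0" by (simp add: R_def)
  have "\<And>N. (\<Sum>k<N. \<bar>v k\<bar>)\<^sup>2 \<le> R"
  proof -
    fix N
    have "ennreal ((\<Sum>k<N. \<bar>v k\<bar>)\<^sup>2) \<le> ennreal R" unfolding RS by (rule SUP_upper) simp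
    then show "(\<Sum>k<N. \<bar>v k\<bar>)\<^sup>2 \<le> R" using R0 by (simp add: ennreal_le_iff)
  qed
  then have "\<And>N. (\<Sum>k<N. \<bar>v k\<bar>) \<le> sqrt R"
    by (metis real_le_rsqrt sum_nonneg abs_ge_zero)
  then have "(\<Sum>k. \<bar>v k\<bar>) \<le> sqrt R" by (intro suminf_le_const s)
  moreover have "\<bar>\<Sum>k. v k\<bar> \<le> (\<Sum>k. \<bar>v k\<bar>)" by (rule summable_rabs[OF s])
  ultimately have "\<bar>\<Sum>k. v k\<bar> \<le> sqrt R" by simp
  then have "(\<Sum>k. v k)\<^sup>2 \<le> R"
    by (metis R0 abs_ge_zero power2_abs real_sqrt_le_iff real_sqrt_pow2 power_mono)
  then show ?thesis unfolding RS[symmetric] by (simp add: ennreal_leI)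
qed

lemma series_L2:
  assumes u: "\<And>k. sqi M (u k)" and s: "summable (\<lambda>k. nrm M (u k))"
  shows "sqi M (\<lambda>t. \<Sum>k. u k t)"
    and "(\<lambda>n. nrm M (\<lambda>t. (\<Sum>k. u k t) - (\<Sum>k<n. u k t))) \<longlonglongrightarrow> 0"
proof -
  note [measurable] = sqi_meas[OF u]
  define h where "h t = (\<Sum>k. u k t)" for t
  have h_meas[measurable]: "h \<in> borel_measurable M" unfolding h_def by measurable
  define Tn where "Tn n = (\<Sum>k. nrm M (u (k + n)))" for n
  have Tn0: "Tn n \<ge> 0" for n
    unfolding Tn_def by (intro suminf_nonneg summable_ignore_initial_segment s) (simp add: nrm_nonneg)
  have W0: "AE t in M. (SUP N. ennreal ((\<Sum>k<N. \<bar>u k t\<bar>)\<^sup>2)) \<noteq> \<infinity>"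
    using W_bound[OF u s] by (intro nn_integral_PInf_AE) (measurable, auto simp: top_unique)
  have summ: "AE t in M. summable (\<lambda>k. \<bar>u k t\<bar>)"
    using W0
  proof eventually_elim
    case (elim t)
    define R where "R = enn2real (SUP N. ennreal ((\<Sum>k<N. \<bar>u k t\<bar>)\<^sup>2))"
    have RS: "ennreal R = (SUP N. ennreal ((\<Sum>k<N. \<bar>u k t\<bar>)\<^sup>2))"
      unfolding R_def by (rule ennreal_enn2real) (use elim in \<open>simp only: less_top[symmetric] infinity_ennreal_def not_False_eq_True\<close>)
    have R0: "R \<ge> 0" by (simp add: R_def)
    have "\<And>N. (\<Sum>k<N. \<bar>u k t\<bar>)\<^sup>2 \<le> R"
    proof -
      fix N
      have "ennreal ((\<Sum>k<N. \<bar>u k t\<bar>)\<^sup>2) \<le> ennreal R" unfolding RS by (rule SUP_upper) simp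
      then show "(\<Sum>k<N. \<bar>u k t\<bar>)\<^sup>2 \<le> R" using R0 by (simp add: ennreal_le_iff)
    qed
    then have "\<And>N. (\<Sum>k<N. \<bar>u k t\<bar>) \<le> sqrt R"
      by (metis real_le_rsqrt sum_nonneg abs_ge_zero)
    then show ?case by (intro summableI_nonneg_bounded) auto
  qed
  have tail: "sqi M (\<lambda>t. h t - (\<Sum>k<n. u k t)) \<and> nrm M (\<lambda>t. h t - (\<Sum>k<n. u k t)) \<le> Tn n" for n
  proof -
    have v: "\<And>k. sqi M (u (k + n))" by (rule u)
    have sv: "summable (\<lambda>k. nrm M (u (k + n)))" by (rule summable_ignore_initial_segment[OF s])
    have "(\<integral>\<^sup>+t. ennreal ((h t - (\<Sum>k<n. u k t))\<^sup>2) \<partial>M) \<le> (\<integral>\<^sup>+t. (SUP N. ennreal ((\<Sum>k<N. \<bar>u (k + n) t\<bar>)\<^sup>2)) \<partial>M)"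
    proof (rule nn_integral_mono_AE)
      show "AE t in M. ennreal ((h t - (\<Sum>k<n. u k t))\<^sup>2) \<le> (SUP N. ennreal ((\<Sum>k<N. \<bar>u (k + n) t\<bar>)\<^sup>2))"
        using summ
      proof eventually_elim
        case (elim t)
        have s1: "summable (\<lambda>k. u k t)" using summable_rabs_cancel[OF elim] .
        have "h t - (\<Sum>k<n. u k t) = (\<Sum>k. u (k + n) t)"
          unfolding h_def using suminf_split_initial_segment[OF s1, of n] by simp
        moreover have "summable (\<lambda>k. \<bar>u (k + n) t\<bar>)"
          using summable_ignore_initial_segment[OF elim, of n] by simp
        ultimately show ?case using W_point[of "\<lambda>k. u (k + n) t"] by simp
      qed
    qed
    also have "\<dots> \<le> ennreal ((Tn n)\<^sup>2)" unfolding Tn_def by (rule W_bound[OF v sv])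
    finally have le: "(\<integral>\<^sup>+t. ennreal ((h t - (\<Sum>k<n. u k t))\<^sup>2) \<partial>M) \<le> ennreal ((Tn n)\<^sup>2)" .
    have int: "integrable M (\<lambda>t. (h t - (\<Sum>k<n. u k t))\<^sup>2)"
      unfolding integrable_iff_bounded
    proof
      show "(\<lambda>t. (h t - (\<Sum>k<n. u k t))\<^sup>2) \<in> borel_measurable M" by measurable
      show "(\<integral>\<^sup>+t. ennreal (norm ((h t - (\<Sum>k<n. u k t))\<^sup>2)) \<partial>M) < \<infinity>"
        using order.strict_trans1[OF le ennreal_less_top] by simp
    qed
    have sq: "sqi M (\<lambda>t. h t - (\<Sum>k<n. u k t))" using int by (simp add: sqi_def)
    have "ennreal ((nrm M (\<lambda>t. h t - (\<Sum>k<n. u k t)))\<^sup>2) = (\<integral>\<^sup>+t. ennreal ((h t - (\<Sum>k<n. u k t))\<^sup>2) \<partial>M)"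
      unfolding nrm_sq by (rule nn_integral_eq_integral[symmetric]) (use int in auto)
    with le have "ennreal ((nrm M (\<lambda>t. h t - (\<Sum>k<n. u k t)))\<^sup>2) \<le> ennreal ((Tn n)\<^sup>2)"
      by simp
    then have "(nrm M (\<lambda>t. h t - (\<Sum>k<n. u k t)))\<^sup>2 \<le> (Tn n)\<^sup>2"
      by (subst (asm) ennreal_le_iff) auto
    then have "nrm M (\<lambda>t. h t - (\<Sum>k<n. u k t)) \<le> Tn n"
      using Tn0[of n] by (rule power2_le_imp_le)
    with sq show ?thesis by simp
  qed
  from tail[of 0] show "sqi M (\<lambda>t. \<Sum>k. u k t)" by (simp add: h_def)
  have "Tn \<longlonglongrightarrow> 0"
  proof (rule LIMSEQ_I)
    fix r :: real assume "0 < r"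
    from suminf_exist_split[OF this s] obtain N where "\<forall>n\<ge>N. norm (\<Sum>i. nrm M (u (i + n))) < r" by blast
    then show "\<exists>N. \<forall>n\<ge>N. norm (Tn n - 0) < r" unfolding Tn_def by auto
  qed
  then show "(\<lambda>n. nrm M (\<lambda>t. (\<Sum>k. u k t) - (\<Sum>k<n. u k t))) \<longlonglongrightarrow> 0"
  proof (rule Lim_null_comparison[rotated])
    show "\<forall>\<^sub>F n in sequentially. norm (nrm M (\<lambda>t. (\<Sum>k. u k t) - (\<Sum>k<n. u k t))) \<le> Tn n"
    proof (rule always_eventually, rule allI)
      fix n
      have "\<bar>nrm M (\<lambda>t. h t - (\<Sum>k<n. u k t))\<bar> \<le> Tn n"
        using tail[of n] nrm_nonneg[of M] by (simp add: abs_of_nonneg)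
      then show "norm (nrm M (\<lambda>t. (\<Sum>k. u k t) - (\<Sum>k<n. u k t))) \<le> Tn n" by (simp add: h_def)
    qed
  qed
qed


context kern begin

lemma Kop_zero: "Kop M k (\<lambda>x. 0) = (\<lambda>t. 0)" by (simp add: Kop_def)

lemma Kop_divide: "Kop M k (\<lambda>x. f x / d) = (\<lambda>t. Kop M k f t / d)"
  using Kop_cmult[of "1/d" f] by simp

lemma Kop_lin_AE:
  assumes "sqi M f" "sqi M g"
  shows "AE t in M. Kop M k (\<lambda>x. f x + a * g x) t = Kop M k f t + a * Kop M k g t"
  using Kop_add_AE[OF assms(1) sqi_cmult[OF assms(2), of a]]
  by (simp add: Kop_cmult)

lemma quad_expand:
  assumes f: "sqi M f" and g: "sqi M g"
  shows "inn M (Kop M k (\<lambda>x. f x + a * g x)) (\<lambda>x. f x + a * g x)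
       = inn M (Kop M k f) f + 2 * a * inn M (Kop M k f) g + a\<^sup>2 * inn M (Kop M k g) g"
proof -
  note [measurable] = sqi_meas[OF f] sqi_meas[OF g]
  have Kf: "sqi M (Kop M k f)" and Kg: "sqi M (Kop M k g)" using Kop_sqi f g by auto
  have fg: "sqi M (\<lambda>x. f x + a * g x)" by (intro sqi_add sqi_cmult f g)
  have "inn M (Kop M k (\<lambda>x. f x + a * g x)) (\<lambda>x. f x + a * g x)
      = inn M (\<lambda>t. Kop M k f t + a * Kop M k g t) (\<lambda>x. f x + a * g x)"
    by (rule inn_cong_AE) (use Kop_lin_AE[OF f g, of a] in auto)
  also have "\<dots> = inn M (Kop M k f) (\<lambda>x. f x + a * g x) + a * inn M (Kop M k g) (\<lambda>x. f x + a * g x)"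
    using Kf Kg fg by (simp add: inn_add sqi_cmult inn_cmult)
  also have "inn M (Kop M k f) (\<lambda>x. f x + a * g x) = inn M (Kop M k f) f + a * inn M (Kop M k f) g"
    using Kf f g by (subst (1 2 3) inn_sym) (simp add: inn_add sqi_cmult inn_cmult)
  also have "inn M (Kop M k g) (\<lambda>x. f x + a * g x) = inn M (Kop M k g) f + a * inn M (Kop M k g) g"
    using Kg f g by (subst (1 2 3) inn_sym) (simp add: inn_add sqi_cmult inn_cmult)
  also have "inn M (Kop M k g) f = inn M (Kop M k f) g"
    using self_adjoint[OF g f] by (simp add: inn_sym)
  finally show ?thesis by (simp add: algebra_simps power2_eq_square)
qed

end

locale kern_psd = kern +
  assumes psd: "sqi M f \<Longrightarrow> 0 \<le> inn M (Kop M k f) f"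
begin

definition opn :: real where
  "opn = Sup {nrm M (Kop M k f) | f. sqi M f \<and> nrm M f \<le> 1}"

lemma opn_upper: assumes "sqi M f" "nrm M f \<le> 1" shows "nrm M (Kop M k f) \<le> opn"
  unfolding opn_def
proof (rule cSup_upper)
  show "bdd_above {nrm M (Kop M k f) | f. sqi M f \<and> nrm M f \<le> 1}"
  proof (rule bdd_aboveI)
    fix x assume "x \<in> {nrm M (Kop M k f) | f. sqi M f \<and> nrm M f \<le> 1}"
    then obtain f where "x = nrm M (Kop M k f)" "sqi M f" "nrm M f \<le> 1" by auto
    then show "x \<le> K" using Kop_sqi(2)[of f] K_nonneg by (smt (verit) mult_left_le)
  qed
qed (use assms in auto)

lemma opn_nonneg: "0 \<le> opn"
proof -
  have "nrm M (Kop M k (\<lambda>x. 0)) \<le> opn" by (rule opn_upper) (auto simp: sqi_zero nrm_def)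
  then show ?thesis by (simp add: Kop_zero nrm_def)
qed

lemma opn_bound: assumes f: "sqi M f" shows "nrm M (Kop M k f) \<le> opn * nrm M f"
proof (cases "nrm M f = 0")
  case True
  then show ?thesis using Kop_sqi(2)[OF f] nrm_nonneg[of M "Kop M k f"] by simp
next
  case False
  then have n: "nrm M f > 0" using nrm_nonneg[of M f] by simp
  have "nrm M (Kop M k (\<lambda>x. (1 / nrm M f) * f x)) \<le> opn"
  proof (rule opn_upper)
    show "sqi M (\<lambda>x. 1 / nrm M f * f x)" by (rule sqi_cmult[OF f])
    show "nrm M (\<lambda>x. 1 / nrm M f * f x) \<le> 1" unfolding nrm_cmult using n by simp
  qed
  then have "nrm M (Kop M k f) / nrm M f \<le> opn"
    using n unfolding Kop_cmult nrm_cmult by simp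
  then show ?thesis using n by (simp add: field_simps)
qed

lemma semi_cs:
  assumes f: "sqi M f" and g: "sqi M g"
  shows "(inn M (Kop M k f) g)\<^sup>2 \<le> inn M (Kop M k f) f * inn M (Kop M k g) g"
  by (rule quad_disc) (metis quad_expand[OF f g] psd sqi_add sqi_cmult f g)

lemma nrmK2: assumes f: "sqi M f" shows "(nrm M (Kop M k f))\<^sup>2 \<le> opn * inn M (Kop M k f) f"
proof -
  have Kf: "sqi M (Kop M k f)" using Kop_sqi f by auto
  have "((nrm M (Kop M k f))\<^sup>2)\<^sup>2 = (inn M (Kop M k f) (Kop M k f))\<^sup>2" by (simp add: inn_self)
  also have "\<dots> \<le> inn M (Kop M k f) f * inn M (Kop M k (Kop M k f)) (Kop M k f)"
    by (rule semi_cs[OF f Kf])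
  also have "inn M (Kop M k (Kop M k f)) (Kop M k f) \<le> opn * (nrm M (Kop M k f))\<^sup>2"
  proof -
    have "inn M (Kop M k (Kop M k f)) (Kop M k f) \<le> nrm M (Kop M k (Kop M k f)) * nrm M (Kop M k f)"
      using cauchy_schwarz[OF Kop_sqi(1)[OF Kf] Kf] by simp
    also have "\<dots> \<le> opn * nrm M (Kop M k f) * nrm M (Kop M k f)"
      by (intro mult_right_mono opn_bound Kf nrm_nonneg)
    finally show ?thesis by (simp add: power2_eq_square mult.assoc)
  qed
  then have "inn M (Kop M k f) f * inn M (Kop M k (Kop M k f)) (Kop M k f) \<le> inn M (Kop M k f) f * (opn * (nrm M (Kop M k f))\<^sup>2)"
    by (intro mult_left_mono psd f)
  finally have *: "((nrm M (Kop M k f))\<^sup>2)\<^sup>2 \<le> (opn * inn M (Kop M k f) f) * (nrm M (Kop M k f))\<^sup>2"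
    by (simp add: mult_ac)
  show ?thesis
  proof (cases "nrm M (Kop M k f) = 0")
    case True then show ?thesis using psd[OF f] opn_nonneg by simp
  next
    case False
    then have "(nrm M (Kop M k f))\<^sup>2 > 0" by simp
    moreover have "(nrm M (Kop M k f))\<^sup>2 * (nrm M (Kop M k f))\<^sup>2 \<le> (opn * inn M (Kop M k f) f) * (nrm M (Kop M k f))\<^sup>2"
      using * by (simp add: power2_eq_square[of "(nrm M (Kop M k f))\<^sup>2"])
    ultimately show ?thesis by (rule mult_right_le_imp_le[rotated])
  qed
qed

definition c :: real where "c = opn / 2"
definition Bop :: "('a \<Rightarrow> real) \<Rightarrow> ('a \<Rightarrow> real)" where
  "Bop f = (\<lambda>t. c * f t - Kop M k f t)"
definition Gam :: "('a \<Rightarrow> real) \<Rightarrow> ('a \<Rightarrow> real)" where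
  "Gam f = (\<lambda>t. f t + Kop M k f t)"

lemma c_nonneg: "0 \<le> c" using opn_nonneg by (simp add: c_def)

lemma Bop_sqi: "sqi M f \<Longrightarrow> sqi M (Bop f)"
  unfolding Bop_def by (intro sqi_diff sqi_cmult Kop_sqi)

lemma Gam_sqi: "sqi M f \<Longrightarrow> sqi M (Gam f)"
  unfolding Gam_def by (intro sqi_add Kop_sqi)

lemma Bop_bound: assumes f: "sqi M f" shows "nrm M (Bop f) \<le> c * nrm M f"
proof -
  have Kf: "sqi M (Kop M k f)" using Kop_sqi f by auto
  have "(nrm M (Bop f))\<^sup>2 = (nrm M (\<lambda>t. c * f t + (-1) * Kop M k f t))\<^sup>2"
    by (simp add: Bop_def)
  also have "\<dots> = (nrm M (\<lambda>t. c * f t))\<^sup>2 + 2 * (-1) * inn M (\<lambda>t. c * f t) (Kop M k f) + (-1)\<^sup>2 * (nrm M (Kop M k f))\<^sup>2"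
    by (rule inn_expand[OF sqi_cmult[OF f] Kf])
  also have "\<dots> = c\<^sup>2 * (nrm M f)\<^sup>2 - 2 * c * inn M (Kop M k f) f + (nrm M (Kop M k f))\<^sup>2"
    by (simp add: nrm_cmult inn_cmult power_mult_distrib inn_sym[of M f] c_nonneg)
  also have "\<dots> \<le> c\<^sup>2 * (nrm M f)\<^sup>2"
    using nrmK2[OF f] by (simp add: c_def)
  finally have "(nrm M (Bop f))\<^sup>2 \<le> (c * nrm M f)\<^sup>2" by (simp add: power_mult_distrib)
  from power2_le_imp_le[OF this] show ?thesis using c_nonneg nrm_nonneg[of M f] by simp
qed

lemma Gam_bound: assumes f: "sqi M f" shows "nrm M (Gam f) \<le> (1 + opn) * nrm M f"
  using nrm_triangle[OF f Kop_sqi(1)[OF f]] opn_bound[OF f] by (simp add: Gam_def algebra_simps)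

lemma Gam_lower: assumes f: "sqi M f" shows "nrm M f \<le> nrm M (Gam f)"
proof -
  have "(nrm M f)\<^sup>2 \<le> inn M f f + inn M (Kop M k f) f" using psd[OF f] by (simp add: inn_self)
  also have "\<dots> = inn M (Gam f) f" unfolding Gam_def by (simp add: inn_add f Kop_sqi)
  also have "\<dots> \<le> nrm M (Gam f) * nrm M f" using cauchy_schwarz[OF Gam_sqi[OF f] f] by simp
  finally have *: "(nrm M f)\<^sup>2 \<le> nrm M (Gam f) * nrm M f" .
  show ?thesis
  proof (cases "nrm M f = 0")
    case True then show ?thesis using nrm_nonneg[of M "Gam f"] by simp
  next
    case False
    then have "nrm M f > 0" using nrm_nonneg[of M f] by simp
    with * show ?thesis by (simp add: power2_eq_square)
  qed
qed

lemma Gam_diff_AE: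
  assumes "sqi M f" "sqi M g"
  shows "AE t in M. Gam (\<lambda>x. f x - g x) t = Gam f t - Gam g t"
  using Kop_diff_AE[OF assms] by eventually_elim (simp add: Gam_def)

lemma Gam_inj:
  assumes f: "sqi M f" and g: "sqi M g" and eq: "AE t in M. Gam f t = Gam g t"
  shows "AE t in M. f t = g t"
proof -
  have d: "sqi M (\<lambda>x. f x - g x)" by (rule sqi_diff[OF f g])
  have "AE t in M. Gam (\<lambda>x. f x - g x) t = 0"
    using Gam_diff_AE[OF f g] eq by eventually_elim simp
  then have "nrm M (Gam (\<lambda>x. f x - g x)) = 0" using nrm_eq_0[OF Gam_sqi[OF d]] by simp
  then have "nrm M (\<lambda>x. f x - g x) = 0" using Gam_lower[OF d] nrm_nonneg[of M "\<lambda>x. f x - g x"] by simp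
  then show ?thesis using nrm_eq_0[OF d] by simp
qed

end

context kern_psd begin

lemma P_sqi: "sqi M g \<Longrightarrow> sqi M ((Bop ^^ n) g)"
  by (induction n) (auto intro: Bop_sqi)

lemma P_bound: "sqi M g \<Longrightarrow> nrm M ((Bop ^^ n) g) \<le> c ^ n * nrm M g"
proof (induction n)
  case (Suc n)
  have "nrm M ((Bop ^^ Suc n) g) \<le> c * nrm M ((Bop ^^ n) g)"
    using Bop_bound[OF P_sqi[OF Suc.prems, of n]] by simp
  also have "\<dots> \<le> c * (c ^ n * nrm M g)" using Suc c_nonneg by (intro mult_left_mono) auto
  finally show ?case by simp
qed simp

lemma Gam_zero: "Gam (\<lambda>x. 0) = (\<lambda>t. 0)" by (simp add: Gam_def Kop_zero)

lemma neumann: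
  assumes g: "sqi M g"
  shows "\<exists>h. sqi M h \<and> (AE t in M. Gam h t = g t) \<and>
     (\<lambda>n. nrm M (\<lambda>t. (\<Sum>k<n. (Bop ^^ k) g t / (1 + c) ^ (k + 1)) - h t)) \<longlonglongrightarrow> 0"
proof -
  define P where "P n = (Bop ^^ n) g" for n
  define u where "u k = (\<lambda>t. P k t / (1 + c) ^ (k + 1))" for k
  define S where "S n = (\<lambda>t. \<Sum>k<n. u k t)" for n
  define q where "q = c / (1 + c)"
  have c1: "1 + c > 0" using c_nonneg by simp
  have q0: "0 \<le> q" and q1: "q < 1" using c_nonneg by (auto simp: q_def)
  have Psqi: "sqi M (P n)" for n unfolding P_def by (rule P_sqi[OF g])
  have usqi: "sqi M (u k)" for k unfolding u_def by (intro sqi_divide Psqi)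
  have Ssqi: "sqi M (S n)" for n unfolding S_def by (intro sqi_sum usqi)
  note [measurable] = sqi_meas[OF Psqi] sqi_meas[OF usqi] sqi_meas[OF Ssqi] sqi_meas[OF g]
  have unrm: "nrm M (u k) \<le> nrm M g / (1 + c) * q ^ k" for k
  proof -
    have "nrm M (u k) = nrm M (P k) / (1 + c) ^ (k + 1)"
      using nrm_cmult[of M "1 / (1 + c) ^ (k + 1)" "P k"] c1 by (simp add: u_def)
    also have "\<dots> \<le> c ^ k * nrm M g / (1 + c) ^ (k + 1)"
      using P_bound[OF g, of k] c1 by (simp add: P_def divide_right_mono)
    also have "\<dots> = nrm M g / (1 + c) * q ^ k" by (simp add: q_def power_divide field_simps)
    finally show ?thesis .
  qed
  have summ: "summable (\<lambda>k. nrm M (u k))"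
  proof (rule summable_comparison_test)
    show "\<exists>N. \<forall>n\<ge>N. norm (nrm M (u n)) \<le> nrm M g / (1 + c) * q ^ n"
      using unrm by (metis abs_of_nonneg nrm_nonneg real_norm_def)
    show "summable (\<lambda>n. nrm M g / (1 + c) * q ^ n)"
      using q0 q1 by (intro summable_mult summable_geometric) auto
  qed
  define h where "h t = (\<Sum>k. u k t)" for t
  have hsqi: "sqi M h" unfolding h_def by (rule series_L2(1)[OF usqi summ])
  note [measurable] = sqi_meas[OF hsqi]
  have conv: "(\<lambda>n. nrm M (\<lambda>t. h t - S n t)) \<longlonglongrightarrow> 0"
    unfolding h_def S_def by (rule series_L2(2)[OF usqi summ])
  have tele: "AE t in M. Gam (S n) t = g t - P n t / (1 + c) ^ n" for n
  proof (induction n)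
    case 0 then show ?case by (simp add: S_def Gam_zero P_def)
  next
    case (Suc n)
    have SS: "S (Suc n) = (\<lambda>t. S n t + u n t)" by (simp add: S_def)
    have PS: "P (Suc n) t = c * P n t - Kop M k (P n) t" for t by (simp add: P_def Bop_def)
    show ?case using Suc Kop_add_AE[OF Ssqi usqi, of n n]
    proof eventually_elim
      case (elim t)
      have "Gam (S (Suc n)) t = S n t + Kop M k (S n) t + (u n t + Kop M k (u n) t)"
        using elim(2) by (simp add: SS Gam_def)
      also have "S n t + Kop M k (S n) t = g t - P n t / (1 + c) ^ n" using elim(1) by (simp add: Gam_def)
      also have "u n t + Kop M k (u n) t = (P n t + Kop M k (P n) t) / (1 + c) ^ (n + 1)"
        by (simp add: u_def Kop_divide add_divide_distrib)
      also have "P n t + Kop M k (P n) t = (1 + c) * P n t - P (Suc n) t" by (simp add: PS algebra_simps)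
      finally have eq: "Gam (S (Suc n)) t = g t - P n t / (1 + c) ^ n + ((1 + c) * P n t - P (Suc n) t) / (1 + c) ^ (n + 1)" .
      have "((1 + c) * P n t - P (Suc n) t) / (1 + c) ^ (n + 1) = (1 + c) * P n t / ((1 + c) * (1 + c) ^ n) - P (Suc n) t / (1 + c) ^ Suc n"
        by (simp add: diff_divide_distrib)
      also have "(1 + c) * P n t / ((1 + c) * (1 + c) ^ n) = P n t / (1 + c) ^ n"
        using c1 by simp
      finally show ?case using eq by simp
    qed
  qed
  have bnd: "nrm M (\<lambda>t. Gam h t - g t) \<le> (1 + opn) * nrm M (\<lambda>t. h t - S n t) + q ^ n * nrm M g" for n
  proof -
    have d: "sqi M (\<lambda>t. h t - S n t)" by (rule sqi_diff[OF hsqi Ssqi])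
    have Gd: "sqi M (Gam (\<lambda>t. h t - S n t))" by (rule Gam_sqi[OF d])
    note [measurable] = sqi_meas[OF Gd] sqi_meas[OF Gam_sqi[OF hsqi]]
    have "nrm M (\<lambda>t. Gam h t - g t) = nrm M (\<lambda>t. Gam (\<lambda>t. h t - S n t) t - P n t / (1 + c) ^ n)"
    proof (rule nrm_cong_AE)
      show "AE t in M. Gam h t - g t = Gam (\<lambda>t. h t - S n t) t - P n t / (1 + c) ^ n"
        using Gam_diff_AE[OF hsqi Ssqi, of n] tele[of n] by eventually_elim simp
    qed measurable
    also have "\<dots> \<le> nrm M (Gam (\<lambda>t. h t - S n t)) + nrm M (\<lambda>t. P n t / (1 + c) ^ n)"
      by (rule nrm_triangle_diff[OF Gd sqi_divide[OF Psqi]])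
    also have "nrm M (\<lambda>t. P n t / (1 + c) ^ n) = nrm M (P n) / (1 + c) ^ n"
      using nrm_cmult[of M "1 / (1 + c) ^ n" "P n"] c1 by simp
    also have "\<dots> \<le> c ^ n * nrm M g / (1 + c) ^ n"
      using P_bound[OF g, of n] c1 by (simp add: P_def divide_right_mono)
    also have "\<dots> = q ^ n * nrm M g" by (simp add: q_def power_divide)
    finally show ?thesis using Gam_bound[OF d] by simp
  qed
  have lim: "(\<lambda>n. (1 + opn) * nrm M (\<lambda>t. h t - S n t) + q ^ n * nrm M g) \<longlonglongrightarrow> 0"
  proof -
    have "(\<lambda>n. (1 + opn) * nrm M (\<lambda>t. h t - S n t)) \<longlonglongrightarrow> (1 + opn) * 0"
      by (intro tendsto_mult tendsto_const conv)
    moreover have "(\<lambda>n. q ^ n * nrm M g) \<longlonglongrightarrow> 0 * nrm M g"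
      by (intro tendsto_mult tendsto_const LIMSEQ_power_zero) (use q0 q1 in auto)
    ultimately show ?thesis using tendsto_add by fastforce
  qed
  have "nrm M (\<lambda>t. Gam h t - g t) \<le> 0"
    by (rule LIMSEQ_le_const[OF lim]) (use bnd in auto)
  then have "nrm M (\<lambda>t. Gam h t - g t) = 0" using nrm_nonneg[of M] by (simp add: order_antisym)
  then have "AE t in M. Gam h t - g t = 0"
    using nrm_eq_0[OF sqi_diff[OF Gam_sqi[OF hsqi] g]] by simp
  then have ae: "AE t in M. Gam h t = g t" by eventually_elim simp
  have conv2: "(\<lambda>n. nrm M (\<lambda>t. (\<Sum>k<n. (Bop ^^ k) g t / (1 + c) ^ (k + 1)) - h t)) \<longlonglongrightarrow> 0"
  proof -
    have "nrm M (\<lambda>t. (\<Sum>k<n. (Bop ^^ k) g t / (1 + c) ^ (k + 1)) - h t) = nrm M (\<lambda>t. h t - S n t)" for n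
      using nrm_cmult[of M "-1" "\<lambda>t. h t - S n t"] by (simp add: S_def u_def P_def)
    then show ?thesis using conv by simp
  qed
  show ?thesis using hsqi ae conv2 by blast
qed

end

lemma id_restr: "(\<lambda>x::real. x) \<in> borel_measurable (restrict_space lborel A)"
  by (rule measurable_restrict_space1) simp

lemma borel_measurable_exp'[measurable (raw)]:
  "f \<in> borel_measurable M \<Longrightarrow> (\<lambda>x. exp (f x :: real)) \<in> borel_measurable M"
  by (rule measurable_compose[OF _ borel_measurable_exp])

locale conc =
  fixes H T :: real
  assumes H1: "1/2 < H" and H2: "H < 1" and T0: "0 < T"
begin

definition M :: "real measure" where "M = restrict_space lborel {0..T}"
definition al :: real where "al = 2 - 2 * H"
definition c0 :: real where "c0 = H * (2 * H - 1)"
definition kk :: "real \<Rightarrow> real \<Rightarrow> real" where "kk t s = c0 / \<bar>t - s\<bar> powr al"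
definition Ipow :: real where "Ipow = T powr (1 - al) / (1 - al)"

lemma al_pos: "0 < al" and al_lt1: "al < 1" using H1 H2 by (auto simp: al_def)
lemma c0_pos: "0 < c0" using H1 H2 by (auto simp: c0_def)
lemma Ipow_nonneg: "0 \<le> Ipow" using al_lt1 by (simp add: Ipow_def)

lemma space_M[simp]: "space M = {0..T}" by (simp add: M_def)
lemma id_M: "(\<lambda>x::real. x) \<in> borel_measurable M" unfolding M_def by (rule id_restr)
lemma sets_D: "{0..T} \<inter> space lborel \<in> sets lborel" by simp

lemma finite_M: "finite_measure M"
proof (rule finite_measureI)
  show "emeasure M (space M) \<noteq> \<infinity>"
    using T0 by (simp add: M_def emeasure_restrict_space)
qed

lemma kk_meas: "(\<lambda>x. kk (fst x) (snd x)) \<in> borel_measurable (M \<Otimes>\<^sub>M M)"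
proof -
  note id_M[measurable]
  show ?thesis unfolding kk_def by measurable
qed

lemma kk_nonneg: "0 \<le> kk t s" using c0_pos by (simp add: kk_def)
lemma kk_sym: "kk t s = kk s t" by (simp add: kk_def abs_minus_commute)

definition gpow :: "real \<Rightarrow> real" where "gpow x = indicator {0..T} x * x powr (- al)"

lemma gpow_nonneg: "0 \<le> gpow x" by (simp add: gpow_def)

lemma gpow_meas[measurable]: "gpow \<in> borel_measurable borel" unfolding gpow_def by measurable

lemma gpow_int: "(\<integral>\<^sup>+x. ennreal (gpow x) \<partial>lborel) = ennreal Ipow"
proof -
  have "((\<lambda>x. x powr (- al)) has_integral (T powr (- al + 1) / (- al + 1))) {0..T}"
    by (rule has_integral_powr_from_0) (use al_lt1 T0 in auto)
  from nn_integral_has_integral_lebesgue[OF _ this]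
  show ?thesis by (simp add: gpow_def Ipow_def add.commute)
qed

lemma kk_point:
  assumes t: "t \<in> {0..T}"
  shows "ennreal (kk t s) * indicator {0..T} s \<le> ennreal (c0 * gpow (t - s)) + ennreal (c0 * gpow (s - t))"
proof (cases "s \<in> {0..T}")
  case False then show ?thesis by simp
next
  case True
  consider "s < t" | "s = t" | "s > t" by linarith
  then show ?thesis
  proof cases
    case 1
    then have "kk t s = c0 * gpow (t - s)" using t True
      by (simp add: kk_def gpow_def powr_minus_divide)
    then show ?thesis using True by (simp add: add_increasing2)
  next
    case 2 then show ?thesis by (simp add: kk_def)
  next
    case 3
    then have "kk t s = c0 * gpow (s - t)" using t True
      by (simp add: kk_def gpow_def powr_minus_divide abs_minus_commute)
    then show ?thesis using True by (simp add: add_increasing)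
  qed
qed

definition Kc :: real where "Kc = 2 * c0 * Ipow"

lemma kk_bound:
  assumes t: "t \<in> space M"
  shows "(\<integral>\<^sup>+s. kk t s \<partial>M) \<le> ennreal Kc"
proof -
  have "(\<integral>\<^sup>+s. kk t s \<partial>M) = (\<integral>\<^sup>+s. ennreal (kk t s) * indicator {0..T} s \<partial>lborel)"
    unfolding M_def by (simp add: nn_integral_restrict_space)
  also have "\<dots> \<le> (\<integral>\<^sup>+s. ennreal (c0 * gpow (t - s)) + ennreal (c0 * gpow (s - t)) \<partial>lborel)"
    using t by (intro nn_integral_mono kk_point) auto
  also have "\<dots> = (\<integral>\<^sup>+s. ennreal (c0 * gpow (t - s)) \<partial>lborel) + (\<integral>\<^sup>+s. ennreal (c0 * gpow (s - t)) \<partial>lborel)"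
    by (rule nn_integral_add) measurable
  also have "(\<integral>\<^sup>+s. ennreal (c0 * gpow (t - s)) \<partial>lborel) = (\<integral>\<^sup>+x. ennreal (c0 * gpow x) \<partial>lborel)"
    using nn_integral_real_affine[of "\<lambda>x. ennreal (c0 * gpow x)" "-1" t] by simp
  also have "(\<integral>\<^sup>+s. ennreal (c0 * gpow (s - t)) \<partial>lborel) = (\<integral>\<^sup>+x. ennreal (c0 * gpow x) \<partial>lborel)"
    using nn_integral_real_affine[of "\<lambda>x. ennreal (c0 * gpow x)" 1 "-t"] by simp
  also have "(\<integral>\<^sup>+x. ennreal (c0 * gpow x) \<partial>lborel) = (\<integral>\<^sup>+x. ennreal c0 * ennreal (gpow x) \<partial>lborel)"
    by (intro nn_integral_cong) (simp add: ennreal_mult c0_pos less_imp_le gpow_nonneg)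
  also have "\<dots> = ennreal c0 * (\<integral>\<^sup>+x. ennreal (gpow x) \<partial>lborel)"
    by (rule nn_integral_cmult) measurable
  also have "\<dots> = ennreal c0 * ennreal Ipow" by (simp add: gpow_int)
  also have "ennreal c0 * ennreal Ipow = ennreal (c0 * Ipow)"
    using c0_pos Ipow_nonneg by (simp add: ennreal_mult)
  also have "ennreal (c0 * Ipow) + ennreal (c0 * Ipow) = ennreal Kc"
    using c0_pos Ipow_nonneg unfolding Kc_def by (simp add: ennreal_plus[symmetric] del: ennreal_plus)
  finally show ?thesis by simp
qed

lemma kern_inst: "kern M kk Kc"
proof -
  interpret finite_measure M by (rule finite_M)
  show ?thesis
  proof unfold_locales
    show "(\<lambda>x. kk (fst x) (snd x)) \<in> borel_measurable (M \<Otimes>\<^sub>M M)" by (rule kk_meas)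
    show "\<And>t s. 0 \<le> kk t s" by (rule kk_nonneg)
    show "\<And>t s. kk t s = kk s t" by (rule kk_sym)
    show "\<And>t. t \<in> space M \<Longrightarrow> (\<integral>\<^sup>+s. kk t s \<partial>M) \<le> ennreal Kc" by (rule kk_bound)
    show "0 \<le> Kc" using c0_pos Ipow_nonneg by (simp add: Kc_def)
  qed
qed

end

lemma integrable_prod_bound:
  fixes g :: "'a \<times> 'b \<Rightarrow> real"
  assumes M: "finite_measure M" and N: "finite_measure N"
  and g[measurable]: "g \<in> borel_measurable (M \<Otimes>\<^sub>M N)"
  and h: "integrable M h"
  and bnd: "\<And>s u. s \<in> space M \<Longrightarrow> u \<in> space N \<Longrightarrow> \<bar>g (s, u)\<bar> \<le> h s"
  shows "integrable (M \<Otimes>\<^sub>M N) g"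
proof -
  interpret M: finite_measure M by (rule M)
  interpret N: finite_measure N by (rule N)
  interpret P: pair_sigma_finite M N ..
  have hm[measurable]: "h \<in> borel_measurable M" using h by auto
  have ih: "integrable (M \<Otimes>\<^sub>M N) (\<lambda>x. h (fst x))"
  proof (rule integrableI_bounded)
    show "(\<lambda>x. h (fst x)) \<in> borel_measurable (M \<Otimes>\<^sub>M N)" by measurable
    have "(\<integral>\<^sup>+x. ennreal (norm (h (fst x))) \<partial>(M \<Otimes>\<^sub>M N)) = (\<integral>\<^sup>+s. (\<integral>\<^sup>+u. ennreal (norm (h s)) \<partial>N) \<partial>M)"
    proof -
      have meas: "(\<lambda>x. ennreal (norm (h (fst x)))) \<in> borel_measurable (M \<Otimes>\<^sub>M N)" by measurable
      from N.nn_integral_fst[OF meas] show ?thesis by simp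
    qed
    also have "\<dots> = (\<integral>\<^sup>+s. ennreal (norm (h s)) * emeasure N (space N) \<partial>M)"
      by (simp add: nn_integral_const mult.commute)
    also have "\<dots> = (\<integral>\<^sup>+s. ennreal (norm (h s)) \<partial>M) * emeasure N (space N)"
      by (rule nn_integral_multc) measurable
    also have "\<dots> < \<infinity>"
    proof -
      have "emeasure N (space N) < top" by (metis N.emeasure_finite infinity_ennreal_def less_top)
      moreover have "(\<integral>\<^sup>+s. ennreal (norm (h s)) \<partial>M) < top" using h by (simp add: integrable_iff_bounded)
      ultimately show ?thesis by (simp add: ennreal_mult_less_top)
    qed
    finally show "(\<integral>\<^sup>+x. ennreal (norm (h (fst x))) \<partial>(M \<Otimes>\<^sub>M N)) < \<infinity>" .
  qed
  show ?thesis
  proof (rule Bochner_Integration.integrable_bound[OF ih g])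
    show "AE x in M \<Otimes>\<^sub>M N. norm (g x) \<le> norm (h (fst x))"
    proof (rule AE_I2)
      fix x assume "x \<in> space (M \<Otimes>\<^sub>M N)"
      then obtain s u where x: "x = (s, u)" "s \<in> space M" "u \<in> space N" by (auto simp: space_pair_measure)
      then show "norm (g x) \<le> norm (h (fst x))" using bnd[of s u] by auto
    qed
  qed
qed

lemma sq_kernel_psd:
  fixes a :: "'a \<Rightarrow> 'b \<Rightarrow> real"
  assumes M: "finite_measure M" and N: "finite_measure N"
  and a[measurable]: "(\<lambda>x. a (fst x) (snd x)) \<in> borel_measurable (M \<Otimes>\<^sub>M N)"
  and abnd: "\<And>t u. \<bar>a t u\<bar> \<le> 1"
  and f: "sqi M f"
  shows "(\<integral>t. (\<integral>s. (\<integral>u. a t u * a s u \<partial>N) * f s * f t \<partial>M) \<partial>M) = (\<integral>u. (\<integral>t. a t u * f t \<partial>M)\<^sup>2 \<partial>N)"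
    and "0 \<le> (\<integral>t. (\<integral>s. (\<integral>u. a t u * a s u \<partial>N) * f s * f t \<partial>M) \<partial>M)"
proof -
  interpret M: finite_measure M by (rule M)
  interpret N: finite_measure N by (rule N)
  interpret P: pair_sigma_finite M N ..
  interpret Q: pair_sigma_finite N M ..
  note fm[measurable] = sqi_meas[OF f]
  have fi: "integrable M f" using M.square_integrable_imp_integrable[OF fm sqi_int2[OF f]] .
  have fia: "integrable M (\<lambda>s. \<bar>f s\<bar>)" using fi by simp
  define A where "A u = (\<integral>s. a s u * f s \<partial>M)" for u
  have Am[measurable]: "A \<in> borel_measurable N"
  proof -
    have a2[measurable]: "(\<lambda>x. a (snd x) (fst x)) \<in> borel_measurable (N \<Otimes>\<^sub>M M)"
      using measurable_compose[OF measurable_pair_swap' a] by (simp add: case_prod_beta)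
    have "(\<lambda>(u, s). a s u * f s) \<in> borel_measurable (N \<Otimes>\<^sub>M M)"
      unfolding case_prod_beta by measurable
    from M.borel_measurable_lebesgue_integral[OF this] show ?thesis unfolding A_def by simp
  qed
  have Abnd: "\<bar>A u\<bar> \<le> (\<integral>s. \<bar>f s\<bar> \<partial>M)" if u: "u \<in> space N" for u
  proof -
    have am[measurable]: "(\<lambda>s. a s u) \<in> borel_measurable M" using measurable_Pair1[OF a, of u] u by simp
    have "\<bar>A u\<bar> \<le> (\<integral>s. \<bar>a s u * f s\<bar> \<partial>M)" unfolding A_def by (rule integral_abs_bound)
    also have "\<dots> \<le> (\<integral>s. \<bar>f s\<bar> \<partial>M)"
    proof (rule integral_mono)
      show "integrable M (\<lambda>s. \<bar>a s u * f s\<bar>)"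
        by (rule Bochner_Integration.integrable_bound[OF fia]) (measurable, use abnd in \<open>auto simp: abs_mult intro!: mult_left_le_one_le\<close>)
      show "\<And>s. s \<in> space M \<Longrightarrow> \<bar>a s u * f s\<bar> \<le> \<bar>f s\<bar>"
        using abnd by (auto simp: abs_mult intro!: mult_left_le_one_le)
    qed (rule fia)
    finally show ?thesis .
  qed
  define C where "C = (\<integral>s. \<bar>f s\<bar> \<partial>M)"
  have inner: "(\<integral>s. (\<integral>u. a t u * a s u \<partial>N) * f s * f t \<partial>M) = (\<integral>u. a t u * f t * A u \<partial>N)"
    if t: "t \<in> space M" for t
  proof -
    have at[measurable]: "a t \<in> borel_measurable N" using measurable_Pair2[OF a t] by simp
    have int: "integrable (M \<Otimes>\<^sub>M N) (\<lambda>x. a t (snd x) * a (fst x) (snd x) * f (fst x) * f t)"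
    proof (rule integrable_prod_bound[OF M N])
      show "(\<lambda>x. a t (snd x) * a (fst x) (snd x) * f (fst x) * f t) \<in> borel_measurable (M \<Otimes>\<^sub>M N)"
        by measurable
      show "integrable M (\<lambda>s. \<bar>f s\<bar> * \<bar>f t\<bar>)" using fia by simp
      fix s u
      have "\<bar>a t u * a s u\<bar> \<le> 1" using abnd[of t u] abnd[of s u] by (simp add: abs_mult mult_le_one)
      then have "(\<bar>a t u\<bar> * \<bar>a s u\<bar>) * (\<bar>f s\<bar> * \<bar>f t\<bar>) \<le> 1 * (\<bar>f s\<bar> * \<bar>f t\<bar>)"
        by (intro mult_right_mono) auto
      then show "\<bar>a t (snd (s, u)) * a (fst (s, u)) (snd (s, u)) * f (fst (s, u)) * f t\<bar> \<le> \<bar>f s\<bar> * \<bar>f t\<bar>"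
        by (simp add: abs_mult mult.assoc)
    qed
    have "(\<integral>s. (\<integral>u. a t u * a s u \<partial>N) * f s * f t \<partial>M) = (\<integral>s. (\<integral>u. a t u * a s u * f s * f t \<partial>N) \<partial>M)"
      by simp
    also have "\<dots> = (\<integral>u. (\<integral>s. a t u * a s u * f s * f t \<partial>M) \<partial>N)"
    proof -
      have int': "integrable (M \<Otimes>\<^sub>M N) (case_prod (\<lambda>s u. a t u * a s u * f s * f t))"
        using int by (simp only: case_prod_beta')
      show ?thesis by (rule P.Fubini_integral[OF int', symmetric])
    qed
    also have "\<dots> = (\<integral>u. a t u * f t * A u \<partial>N)"
      unfolding A_def by (simp add: integral_mult_right_zero[symmetric] mult_ac)
    finally show ?thesis .
  qed
  have int2: "integrable (M \<Otimes>\<^sub>M N) (\<lambda>x. a (fst x) (snd x) * f (fst x) * A (snd x))"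
  proof (rule integrable_prod_bound[OF M N])
    show "(\<lambda>x. a (fst x) (snd x) * f (fst x) * A (snd x)) \<in> borel_measurable (M \<Otimes>\<^sub>M N)" by measurable
    show "integrable M (\<lambda>s. \<bar>f s\<bar> * C)" using fia by simp
    fix s u assume "s \<in> space M" "u \<in> space N"
    then have "\<bar>A u\<bar> \<le> C" using Abnd by (simp add: C_def)
    moreover have "\<bar>a s u\<bar> \<le> 1" by (rule abnd)
    ultimately have "\<bar>a s u\<bar> * \<bar>A u\<bar> \<le> 1 * C" by (intro mult_mono) auto
    then have "\<bar>a s u * A u\<bar> \<le> C" by (simp add: abs_mult)
    then have "\<bar>f s\<bar> * \<bar>a s u * A u\<bar> \<le> \<bar>f s\<bar> * C" by (intro mult_left_mono) auto
    then show "\<bar>a (fst (s, u)) (snd (s, u)) * f (fst (s, u)) * A (snd (s, u))\<bar> \<le> \<bar>f s\<bar> * C"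
      by (simp add: abs_mult mult_ac)
  qed
  have "(\<integral>t. (\<integral>s. (\<integral>u. a t u * a s u \<partial>N) * f s * f t \<partial>M) \<partial>M) = (\<integral>t. (\<integral>u. a t u * f t * A u \<partial>N) \<partial>M)"
    by (rule Bochner_Integration.integral_cong[OF refl inner])
  also have "\<dots> = (\<integral>u. (\<integral>t. a t u * f t * A u \<partial>M) \<partial>N)"
  proof -
    have int': "integrable (M \<Otimes>\<^sub>M N) (case_prod (\<lambda>t u. a t u * f t * A u))"
      using int2 by (simp only: case_prod_beta')
    show ?thesis by (rule P.Fubini_integral[OF int', symmetric])
  qed
  also have "\<dots> = (\<integral>u. (\<integral>t. a t u * f t \<partial>M)\<^sup>2 \<partial>N)"
    by (simp add: A_def power2_eq_square)
  finally show eq: "(\<integral>t. (\<integral>s. (\<integral>u. a t u * a s u \<partial>N) * f s * f t \<partial>M) \<partial>M) = (\<integral>u. (\<integral>t. a t u * f t \<partial>M)\<^sup>2 \<partial>N)" .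
  show "0 \<le> (\<integral>t. (\<integral>s. (\<integral>u. a t u * a s u \<partial>N) * f s * f t \<partial>M) \<partial>M)"
    unfolding eq by simp
qed


lemma integrable_eq_on_space:
  assumes "integrable M f" "\<And>x. x \<in> space M \<Longrightarrow> f x = g x" shows "integrable M g"
proof -
  have "integrable M f \<longleftrightarrow> integrable M g" by (rule Bochner_Integration.integrable_cong) (auto simp: assms(2))
  with assms(1) show ?thesis by simp
qed

context conc begin

definition ek :: "real \<Rightarrow> real \<Rightarrow> real \<Rightarrow> real" where "ek l t s = exp (- l * \<bar>t - s\<bar>)"
definition phi :: "real \<Rightarrow> real \<Rightarrow> real \<Rightarrow> real" where
  "phi l t u = (if u \<le> t then exp (- l * (t - u)) else 0)"

lemma ek_meas: "(\<lambda>x. ek l (fst x) (snd x)) \<in> borel_measurable (M \<Otimes>\<^sub>M M)"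
proof -
  note id_M[measurable]
  show ?thesis unfolding ek_def by measurable
qed

lemma phi_meas: "(\<lambda>x. phi l (fst x) (snd x)) \<in> borel_measurable (M \<Otimes>\<^sub>M M)"
proof -
  note id_M[measurable]
  show ?thesis unfolding phi_def by measurable
qed

lemma phi_bnd: "0 \<le> l \<Longrightarrow> \<bar>phi l t u\<bar> \<le> 1"
  by (auto simp: phi_def mult_nonneg_nonneg)

lemma ek_kern: "0 \<le> l \<Longrightarrow> kern M (ek l) T"
proof -
  assume l: "0 \<le> l"
  interpret finite_measure M by (rule finite_M)
  show ?thesis
  proof unfold_locales
    show "(\<lambda>x. ek l (fst x) (snd x)) \<in> borel_measurable (M \<Otimes>\<^sub>M M)" by (rule ek_meas)
    show "\<And>t s. 0 \<le> ek l t s" by (simp add: ek_def)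
    show "\<And>t s. ek l t s = ek l s t" by (simp add: ek_def abs_minus_commute)
    show "0 \<le> T" using T0 by simp
    fix t assume "t \<in> space M"
    have "(\<integral>\<^sup>+s. ek l t s \<partial>M) \<le> (\<integral>\<^sup>+s. 1 \<partial>M)"
      using l by (intro nn_integral_mono) (auto simp: ek_def mult_nonneg_nonneg)
    also have "\<dots> = ennreal T" using T0 by (simp add: M_def emeasure_restrict_space)
    finally show "(\<integral>\<^sup>+s. ek l t s \<partial>M) \<le> ennreal T" .
  qed
qed

lemma FTC_exp:
  fixes l m :: real
  assumes l: "0 < l" and m: "0 \<le> m"
  shows "(\<integral>u. indicator {0..m} u *\<^sub>R exp (2 * l * u) \<partial>lborel) = (exp (2 * l * m) - 1) / (2 * l)"
proof -
  have "(\<integral>u. indicator {0..m} u *\<^sub>R exp (2 * l * u) \<partial>lborel) = exp (2 * l * m) / (2 * l) - exp (2 * l * 0) / (2 * l)"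
  proof (rule integral_FTC_atLeastAtMost[OF m])
    fix x
    have "((\<lambda>u. exp (2 * l * u) / (2 * l)) has_real_derivative exp (2 * l * x)) (at x)"
      using l by (auto intro!: derivative_eq_intros)
    then show "((\<lambda>u. exp (2 * l * u) / (2 * l)) has_vector_derivative exp (2 * l * x)) (at x within {0..m})"
      by (simp add: has_real_derivative_iff_has_vector_derivative[symmetric] has_field_derivative_at_within)
  qed (auto intro!: continuous_intros)
  then show ?thesis by (simp add: diff_divide_distrib)
qed

lemma FTC_exp':
  fixes l m :: real
  assumes l: "0 < l" and m: "0 \<le> m"
  shows "(\<integral>u. indicator {0..m} u * exp (2 * l * u) \<partial>lborel) = (exp (2 * l * m) - 1) / (2 * l)"
  using FTC_exp[OF l m] by simp

lemma ek_decomp: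
  assumes l: "0 < l" and t: "t \<in> {0..T}" and s: "s \<in> {0..T}"
  shows "ek l t s = exp (- l * t) * exp (- l * s) + 2 * l * (\<integral>u. phi l t u * phi l s u \<partial>M)"
proof -
  define m where "m = min t s"
  have m0: "0 \<le> m" using t s by (simp add: m_def)
  have "(\<integral>u. phi l t u * phi l s u \<partial>M) = (\<integral>u. indicator {0..T} u *\<^sub>R (phi l t u * phi l s u) \<partial>lborel)"
    unfolding M_def by (rule integral_restrict_space) simp
  also have "\<dots> = (\<integral>u. exp (- l * (t + s)) * (indicator {0..m} u *\<^sub>R exp (2 * l * u)) \<partial>lborel)"
  proof (rule Bochner_Integration.integral_cong[OF refl])
    fix u
    show "indicator {0..T} u *\<^sub>R (phi l t u * phi l s u) = exp (- l * (t + s)) * (indicator {0..m} u *\<^sub>R exp (2 * l * u))"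
    proof (cases "0 \<le> u \<and> u \<le> m")
      case True
      then have "u \<le> t" "u \<le> s" "u \<in> {0..T}" using t s by (auto simp: m_def)
      then show ?thesis using True
        by (simp add: phi_def indicator_def mult_exp_exp algebra_simps)
    next
      case False
      then have "u \<notin> {0..T} \<or> \<not> u \<le> t \<or> \<not> u \<le> s" by (auto simp: m_def)
      then show ?thesis using False by (auto simp: phi_def indicator_def)
    qed
  qed
  also have "\<dots> = exp (- l * (t + s)) * ((exp (2 * l * m) - 1) / (2 * l))"
    by (simp add: FTC_exp'[OF l m0])
  finally have I: "(\<integral>u. phi l t u * phi l s u \<partial>M) = exp (- l * (t + s)) * ((exp (2 * l * m) - 1) / (2 * l))" .
  have tsm: "t + s - 2 * m = \<bar>t - s\<bar>" by (simp add: m_def min_def)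
  have "2 * l * (\<integral>u. phi l t u * phi l s u \<partial>M) = exp (- l * (t + s)) * exp (2 * l * m) - exp (- l * (t + s))"
    unfolding I using l by (simp add: field_simps)
  also have "exp (- l * (t + s)) * exp (2 * l * m) = exp (- l * (t + s - 2 * m))"
    by (simp add: mult_exp_exp algebra_simps)
  also have "exp (- l * (t + s)) = exp (- l * t) * exp (- l * s)"
    by (simp add: mult_exp_exp algebra_simps)
  finally show ?thesis unfolding tsm by (simp add: ek_def)
qed

lemma ek_psd:
  assumes l: "0 < l" and f: "sqi M f"
  shows "0 \<le> inn M (Kop M (ek l) f) f"
proof -
  interpret E: kern M "ek l" T using ek_kern l by simp
  note fm[measurable] = sqi_meas[OF f]
  have fi: "integrable M f" using E.square_integrable_imp_integrable[OF fm sqi_int2[OF f]] .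
  define a where "a t = exp (- l * t)" for t
  have am[measurable]: "a \<in> borel_measurable M" unfolding a_def using id_M by measurable
  have abnd: "\<bar>a t\<bar> \<le> 1" if "t \<in> space M" for t using that l by (simp add: a_def mult_nonneg_nonneg)
  have ekm: "ek l t \<in> borel_measurable M" if "t \<in> space M" for t using E.k_meas2[OF that] .
  define Y where "Y t = (\<integral>s. (\<integral>u. phi l t u * phi l s u \<partial>M) * f s * f t \<partial>M)" for t
  define X where "X t = (\<integral>s. a t * a s * f s * f t \<partial>M)" for t
  define Z where "Z t = (\<integral>s. ek l t s * f s * f t \<partial>M)" for t
  have intX1: "integrable M (\<lambda>s. a t * a s * f s * f t)" if "t \<in> space M" for t
  proof (rule Bochner_Integration.integrable_bound[of _ "\<lambda>s. \<bar>f s\<bar> * \<bar>f t\<bar>"])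
    show "integrable M (\<lambda>s. \<bar>f s\<bar> * \<bar>f t\<bar>)" using fi by simp
    show "(\<lambda>s. a t * a s * f s * f t) \<in> borel_measurable M" by measurable
    show "AE s in M. norm (a t * a s * f s * f t) \<le> norm (\<bar>f s\<bar> * \<bar>f t\<bar>)"
    proof (rule AE_I2)
      fix s assume s: "s \<in> space M"
      have "\<bar>a t\<bar> * \<bar>a s\<bar> \<le> 1" using abnd[OF that] abnd[OF s] by (simp add: mult_le_one)
      then have "(\<bar>a t\<bar> * \<bar>a s\<bar>) * (\<bar>f s\<bar> * \<bar>f t\<bar>) \<le> 1 * (\<bar>f s\<bar> * \<bar>f t\<bar>)" by (intro mult_right_mono) auto
      then show "norm (a t * a s * f s * f t) \<le> norm (\<bar>f s\<bar> * \<bar>f t\<bar>)" by (simp add: abs_mult mult_ac)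
    qed
  qed
  have intZ1: "integrable M (\<lambda>s. ek l t s * f s * f t)" if t: "t \<in> space M" for t
  proof (rule Bochner_Integration.integrable_bound[of _ "\<lambda>s. \<bar>f s\<bar> * \<bar>f t\<bar>"])
    note ekm[OF t, measurable]
    show "integrable M (\<lambda>s. \<bar>f s\<bar> * \<bar>f t\<bar>)" using fi by simp
    show "(\<lambda>s. ek l t s * f s * f t) \<in> borel_measurable M" by measurable
    show "AE s in M. norm (ek l t s * f s * f t) \<le> norm (\<bar>f s\<bar> * \<bar>f t\<bar>)"
    proof (rule AE_I2)
      fix s
      have "ek l t s \<le> 1" "0 \<le> ek l t s" using l by (auto simp: ek_def mult_nonneg_nonneg)
      then have "ek l t s * (\<bar>f s\<bar> * \<bar>f t\<bar>) \<le> 1 * (\<bar>f s\<bar> * \<bar>f t\<bar>)" by (intro mult_right_mono) auto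
      then show "norm (ek l t s * f s * f t) \<le> norm (\<bar>f s\<bar> * \<bar>f t\<bar>)" using \<open>0 \<le> ek l t s\<close> by (simp add: abs_mult mult_ac)
    qed
  qed
  have ZXY: "Z t = X t + 2 * l * Y t" if t: "t \<in> space M" for t
  proof -
    have "Z t = (\<integral>s. a t * a s * f s * f t + 2 * l * ((\<integral>u. phi l t u * phi l s u \<partial>M) * f s * f t) \<partial>M)"
      unfolding Z_def
      by (rule Bochner_Integration.integral_cong[OF refl]) (use t in \<open>auto simp: ek_decomp[OF l] a_def algebra_simps\<close>)
    also have "\<dots> = X t + (\<integral>s. 2 * l * ((\<integral>u. phi l t u * phi l s u \<partial>M) * f s * f t) \<partial>M)"
    proof (rule Bochner_Integration.integral_add[OF intX1[OF t], folded X_def])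
      have "integrable M (\<lambda>s. ek l t s * f s * f t - a t * a s * f s * f t)"
        using intZ1[OF t] intX1[OF t] by simp
      then show "integrable M (\<lambda>s. 2 * l * ((\<integral>u. phi l t u * phi l s u \<partial>M) * f s * f t))"
        by (rule integrable_eq_on_space)
           (use t in \<open>auto simp: ek_decomp[OF l] a_def algebra_simps\<close>)
    qed
    also have "(\<integral>s. 2 * l * ((\<integral>u. phi l t u * phi l s u \<partial>M) * f s * f t) \<partial>M) = 2 * l * Y t"
      unfolding Y_def by simp
    finally show ?thesis .
  qed
  have intZ: "integrable M Z"
  proof -
    have "integrable M (\<lambda>t. Kop M (ek l) f t * f t)" by (intro sqi_mult_integrable E.Kop_sqi(1) f f)
    then show ?thesis unfolding Z_def Kop_def by simp
  qed
  have Xeq: "X t = (a t * f t) * (\<integral>s. a s * f s \<partial>M)" for t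
  proof -
    have "X t = (\<integral>s. (a t * f t) * (a s * f s) \<partial>M)"
      unfolding X_def by (rule Bochner_Integration.integral_cong) (auto simp: mult_ac)
    also have "\<dots> = (a t * f t) * (\<integral>s. a s * f s \<partial>M)" by (rule integral_mult_right_zero)
    finally show ?thesis .
  qed
  have intX: "integrable M X"
  proof -
    have iaf: "integrable M (\<lambda>t. a t * f t)"
    proof (rule Bochner_Integration.integrable_bound[of _ "\<lambda>t. \<bar>f t\<bar>"])
      show "integrable M (\<lambda>t. \<bar>f t\<bar>)" using fi by simp
      show "(\<lambda>t. a t * f t) \<in> borel_measurable M" by measurable
      show "AE t in M. norm (a t * f t) \<le> norm \<bar>f t\<bar>"
        using abnd by (auto simp: abs_mult intro!: AE_I2 mult_left_le_one_le)
    qed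
    then have "integrable M (\<lambda>t. (\<integral>s. a s * f s \<partial>M) * (a t * f t))" by (rule integrable_mult_right)
    then show ?thesis by (rule integrable_eq_on_space) (simp add: Xeq mult_ac)
  qed
  have intY: "integrable M (\<lambda>t. 2 * l * Y t)"
  proof -
    have "integrable M (\<lambda>t. Z t - X t)" using intZ intX by simp
    then show ?thesis by (rule integrable_eq_on_space) (simp add: ZXY)
  qed
  have "inn M (Kop M (ek l) f) f = (\<integral>t. Z t \<partial>M)" unfolding inn_def Kop_def Z_def by simp
  also have "\<dots> = (\<integral>t. X t + 2 * l * Y t \<partial>M)" by (rule Bochner_Integration.integral_cong[OF refl]) (simp add: ZXY)
  also have "\<dots> = (\<integral>t. X t \<partial>M) + (\<integral>t. 2 * l * Y t \<partial>M)" by (rule Bochner_Integration.integral_add[OF intX intY])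
  also have "(\<integral>t. X t \<partial>M) = (\<integral>s. a s * f s \<partial>M)\<^sup>2"
  proof -
    have "(\<integral>t. X t \<partial>M) = (\<integral>t. (a t * f t) * (\<integral>s. a s * f s \<partial>M) \<partial>M)" by (simp only: Xeq)
    also have "\<dots> = (\<integral>t. a t * f t \<partial>M) * (\<integral>s. a s * f s \<partial>M)" by (rule integral_mult_left_zero)
    finally show ?thesis by (simp add: power2_eq_square)
  qed
  also have "(\<integral>t. 2 * l * Y t \<partial>M) = 2 * l * (\<integral>t. Y t \<partial>M)" by simp
  finally have eq: "inn M (Kop M (ek l) f) f = (\<integral>s. a s * f s \<partial>M)\<^sup>2 + 2 * l * (\<integral>t. Y t \<partial>M)" .
  have "0 \<le> (\<integral>t. Y t \<partial>M)"
    unfolding Y_def using sq_kernel_psd(2)[OF finite_M finite_M phi_meas phi_bnd f, of l] l by simp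
  then show ?thesis unfolding eq using l by simp
qed

end

context conc begin

definition Gm :: real where "Gm = Gamma al"
definition w :: "real \<Rightarrow> real" where "w l = indicator {0..} l * l powr (al - 1)"

lemma Gm_pos: "0 < Gm" using al_pos by (simp add: Gm_def)
lemma w_nonneg: "0 \<le> w l" by (simp add: w_def)
lemma w_meas[measurable]: "w \<in> borel_measurable borel" unfolding w_def by measurable

lemma w_exp_nn:
  assumes x: "0 < x"
  shows "(\<integral>\<^sup>+l. ennreal (w l * exp (- l * x)) \<partial>lborel) = ennreal (Gm * x powr (- al))"
proof -
  define I where "I = (\<integral>\<^sup>+l. ennreal (w l * exp (- l * x)) \<partial>lborel)"
  have "ennreal Gm = (\<integral>\<^sup>+t. ennreal (indicator {0..} t * t powr (al - 1) / exp t) \<partial>lborel)"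
    unfolding Gm_def by (rule Gamma_conv_nn_integral_real[OF al_pos])
  also have "\<dots> = ennreal \<bar>x\<bar> * (\<integral>\<^sup>+l. ennreal (indicator {0..} (0 + x * l) * (0 + x * l) powr (al - 1) / exp (0 + x * l)) \<partial>lborel)"
    by (rule nn_integral_real_affine) (use x in auto)
  also have "(\<integral>\<^sup>+l. ennreal (indicator {0..} (0 + x * l) * (0 + x * l) powr (al - 1) / exp (0 + x * l)) \<partial>lborel)
      = (\<integral>\<^sup>+l. ennreal (x powr (al - 1)) * ennreal (w l * exp (- l * x)) \<partial>lborel)"
  proof (rule nn_integral_cong)
    fix l
    show "ennreal (indicator {0..} (0 + x * l) * (0 + x * l) powr (al - 1) / exp (0 + x * l)) = ennreal (x powr (al - 1)) * ennreal (w l * exp (- l * x))"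
    proof (cases "0 \<le> l")
      case True
      then have "indicator {0..} (x * l) * (x * l) powr (al - 1) / exp (x * l) = x powr (al - 1) * (w l * exp (- l * x))"
        using x by (simp add: w_def powr_mult exp_minus field_simps)
      then show ?thesis using ennreal_mult[of "x powr (al - 1)" "w l * exp (- l * x)"] w_nonneg[of l] by simp
    next
      case False
      then have "x * l < 0" using x by (simp add: mult_pos_neg)
      then show ?thesis using False by (simp add: w_def)
    qed
  qed
  also have "\<dots> = ennreal (x powr (al - 1)) * I"
    unfolding I_def by (rule nn_integral_cmult) measurable
  finally have eq0: "ennreal Gm = ennreal \<bar>x\<bar> * (ennreal (x powr (al - 1)) * I)" .
  have "ennreal \<bar>x\<bar> * (ennreal (x powr (al - 1)) * I) = (ennreal \<bar>x\<bar> * ennreal (x powr (al - 1))) * I"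
    by (simp only: mult.assoc)
  also have "ennreal \<bar>x\<bar> * ennreal (x powr (al - 1)) = ennreal (\<bar>x\<bar> * x powr (al - 1))"
    by (rule ennreal_mult[symmetric]) auto
  also have "\<bar>x\<bar> * x powr (al - 1) = x powr al" using x by (simp add: powr_mult_base)
  finally have eq: "ennreal Gm = ennreal (x powr al) * I" using eq0 by simp
  have P: "0 < x powr al" using x by simp
  have "ennreal (x powr al) * ennreal (Gm * x powr (- al)) = ennreal (x powr al * (Gm * x powr (- al)))"
    by (rule ennreal_mult[symmetric]) (use P Gm_pos in auto)
  also have "x powr al * (Gm * x powr (- al)) = Gm" using P by (simp add: powr_minus field_simps)
  finally have "ennreal (x powr al) * I = ennreal (x powr al) * ennreal (Gm * x powr (- al))"
    unfolding eq[symmetric] by simp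
  moreover have a: "ennreal (x powr al) \<noteq> 0" using P by simp
  moreover have b: "ennreal (x powr al) \<noteq> top" by simp
  ultimately have "I = ennreal (Gm * x powr (- al))"
    using ennreal_mult_cancel_left[of "ennreal (x powr al)" I "ennreal (Gm * x powr (- al))"] by blast
  then show ?thesis unfolding I_def .
qed

lemma w_exp_int:
  assumes x: "0 < x"
  shows "integrable lborel (\<lambda>l. w l * exp (- l * x))" "(\<integral>l. w l * exp (- l * x) \<partial>lborel) = Gm * x powr (- al)"
proof -
  have "integrable lborel (\<lambda>l. w l * exp (- l * x)) \<and> (\<integral>l. w l * exp (- l * x) \<partial>lborel) = Gm * x powr (- al)"
  proof -
    have m: "(\<lambda>l. w l * exp (- l * x)) \<in> borel_measurable lborel" by measurable
    have ae: "AE l in lborel. 0 \<le> w l * exp (- l * x)" by (rule AE_I2) (simp add: w_nonneg)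
    have nn: "0 \<le> Gm * x powr (- al)" using Gm_pos by simp
    show ?thesis by (rule iffD1[OF nn_integral_eq_integrable[OF m ae nn] w_exp_nn[OF x]])
  qed
  then show "integrable lborel (\<lambda>l. w l * exp (- l * x))" "(\<integral>l. w l * exp (- l * x) \<partial>lborel) = Gm * x powr (- al)" by auto
qed

lemma AE_neq: "AE s in M. s \<noteq> t"
proof (rule AE_I[where N="{t} \<inter> {0..T}"])
  show "{s \<in> space M. \<not> s \<noteq> t} \<subseteq> {t} \<inter> {0..T}" by auto
  show "emeasure M ({t} \<inter> {0..T}) = 0"
    unfolding M_def
  proof (subst emeasure_restrict_space)
    show "emeasure lborel ({t} \<inter> {0..T}) = 0" by (rule emeasure_eq_0[of "{t}"]) auto
  qed auto
  show "{t} \<inter> {0..T} \<in> sets M" unfolding M_def by (auto simp: sets_restrict_space_iff)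
qed

lemma kk_gam:
  assumes "s \<noteq> t"
  shows "(\<integral>\<^sup>+l. ennreal (w l * ek l t s) \<partial>lborel) = ennreal (Gm / c0 * kk t s)"
proof -
  have x: "0 < \<bar>t - s\<bar>" using assms by simp
  have "(\<integral>\<^sup>+l. ennreal (w l * ek l t s) \<partial>lborel) = ennreal (Gm * \<bar>t - s\<bar> powr (- al))"
    unfolding ek_def by (rule w_exp_nn[OF x])
  also have "Gm * \<bar>t - s\<bar> powr (- al) = Gm / c0 * kk t s"
    using c0_pos by (simp add: kk_def powr_minus_divide)
  finally show ?thesis .
qed

lemma kk_gam_int:
  assumes "s \<noteq> t"
  shows "integrable lborel (\<lambda>l. w l * ek l t s)" "(\<integral>l. w l * ek l t s \<partial>lborel) = Gm / c0 * kk t s"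
proof -
  have x: "0 < \<bar>t - s\<bar>" using assms by simp
  show "integrable lborel (\<lambda>l. w l * ek l t s)" unfolding ek_def by (rule w_exp_int(1)[OF x])
  have "(\<integral>l. w l * ek l t s \<partial>lborel) = Gm * \<bar>t - s\<bar> powr (- al)"
    unfolding ek_def by (rule w_exp_int(2)[OF x])
  also have "\<dots> = Gm / c0 * kk t s" using c0_pos by (simp add: kk_def powr_minus_divide)
  finally show "(\<integral>l. w l * ek l t s \<partial>lborel) = Gm / c0 * kk t s" .
qed

end

lemma abs_integral_le_nn:
  fixes g :: "'a \<Rightarrow> real"
  shows "ennreal \<bar>integral\<^sup>L M g\<bar> \<le> (\<integral>\<^sup>+x. ennreal \<bar>g x\<bar> \<partial>M)"
proof (cases "integrable M g")
  case True
  then show ?thesis using integral_norm_bound_ennreal[OF True] by simp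
next
  case False
  then show ?thesis by (simp add: not_integrable_integral_eq)
qed

context conc begin

interpretation K: kern M kk Kc by (rule kern_inst)
interpretation PL: pair_sigma_finite M lborel ..

lemma L1:
  assumes f[measurable]: "f \<in> borel_measurable M" and t: "t \<in> space M"
  shows "(\<integral>\<^sup>+s. (\<integral>\<^sup>+l. ennreal (w l * ek l t s * \<bar>f s\<bar>) \<partial>lborel) \<partial>M) = ennreal (Gm / c0) * K.F f t"
proof -
  note K.k_meas2[OF t, measurable]
  have "(\<integral>\<^sup>+s. (\<integral>\<^sup>+l. ennreal (w l * ek l t s * \<bar>f s\<bar>) \<partial>lborel) \<partial>M) = (\<integral>\<^sup>+s. ennreal (Gm / c0) * ennreal (kk t s * \<bar>f s\<bar>) \<partial>M)"
  proof (rule nn_integral_cong_AE)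
    show "AE s in M. (\<integral>\<^sup>+l. ennreal (w l * ek l t s * \<bar>f s\<bar>) \<partial>lborel) = ennreal (Gm / c0) * ennreal (kk t s * \<bar>f s\<bar>)"
      using AE_neq[of t]
    proof eventually_elim
      case (elim s)
      have "(\<integral>\<^sup>+l. ennreal (w l * ek l t s * \<bar>f s\<bar>) \<partial>lborel) = (\<integral>\<^sup>+l. ennreal (w l * ek l t s) * ennreal \<bar>f s\<bar> \<partial>lborel)"
        by (intro nn_integral_cong) (simp add: ennreal_mult w_nonneg ek_def)
      also have "\<dots> = (\<integral>\<^sup>+l. ennreal (w l * ek l t s) \<partial>lborel) * ennreal \<bar>f s\<bar>"
        by (rule nn_integral_multc) (unfold ek_def, measurable)
      also have "\<dots> = ennreal (Gm / c0 * kk t s) * ennreal \<bar>f s\<bar>" using kk_gam[OF elim] by simp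
      also have "\<dots> = ennreal (Gm / c0) * ennreal (kk t s * \<bar>f s\<bar>)"
      proof -
        have e: "ennreal (Gm / c0 * kk t s) = ennreal (Gm / c0) * ennreal (kk t s)"
          by (rule ennreal_mult) (use Gm_pos c0_pos kk_nonneg[of t s] in auto)
        have e2: "ennreal (kk t s * \<bar>f s\<bar>) = ennreal (kk t s) * ennreal \<bar>f s\<bar>"
          by (rule ennreal_mult) (use kk_nonneg[of t s] in auto)
        show ?thesis by (simp only: e e2 mult.assoc)
      qed
      finally show ?case .
    qed
  qed
  also have "\<dots> = ennreal (Gm / c0) * K.F f t"
    unfolding K.F_def by (rule nn_integral_cmult) measurable
  finally show ?thesis .
qed

lemma idMl: "(\<lambda>x. x) \<in> M \<rightarrow>\<^sub>M lborel"
  using id_M by (simp add: measurable_lborel2)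

lemma meas_Ml: "g \<in> borel_measurable (lborel \<Otimes>\<^sub>M lborel) \<Longrightarrow> g \<in> borel_measurable (M \<Otimes>\<^sub>M lborel)"
proof -
  assume g: "g \<in> borel_measurable (lborel \<Otimes>\<^sub>M lborel)"
  have "(\<lambda>x. (fst x, snd x)) \<in> (M \<Otimes>\<^sub>M lborel) \<rightarrow>\<^sub>M (lborel \<Otimes>\<^sub>M lborel)"
    by (intro measurable_Pair measurable_compose[OF measurable_fst idMl] measurable_snd)
  from measurable_compose[OF this g] show ?thesis by simp
qed

lemma meas_MlM: "g \<in> borel_measurable ((lborel \<Otimes>\<^sub>M lborel) \<Otimes>\<^sub>M lborel) \<Longrightarrow> g \<in> borel_measurable ((M \<Otimes>\<^sub>M lborel) \<Otimes>\<^sub>M M)"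
proof -
  assume g: "g \<in> borel_measurable ((lborel \<Otimes>\<^sub>M lborel) \<Otimes>\<^sub>M lborel)"
  have "(\<lambda>x. ((fst (fst x), snd (fst x)), snd x)) \<in> ((M \<Otimes>\<^sub>M lborel) \<Otimes>\<^sub>M M) \<rightarrow>\<^sub>M ((lborel \<Otimes>\<^sub>M lborel) \<Otimes>\<^sub>M lborel)"
    by (intro measurable_Pair measurable_compose[OF measurable_fst idMl] measurable_compose[OF measurable_snd idMl]
        measurable_compose[OF measurable_fst measurable_fst] measurable_compose[OF measurable_fst measurable_snd]
        measurable_compose[OF measurable_compose[OF measurable_fst measurable_fst] idMl])
  from measurable_compose[OF this g] show ?thesis by simp
qed

lemma step_a:
  assumes f: "sqi M f" and t: "t \<in> space M" and Ft: "K.F f t < \<infinity>"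
  shows "Kop M kk f t = c0 / Gm * (\<integral>l. w l * Kop M (ek l) f t \<partial>lborel)"
proof -
  note fm[measurable] = sqi_meas[OF f]
  note K.k_meas2[OF t, measurable]
  have A1[measurable]: "(\<lambda>x. w (snd x) * ek (snd x) t (fst x)) \<in> borel_measurable (M \<Otimes>\<^sub>M lborel)"
    by (rule meas_Ml) (unfold ek_def, measurable)
  define \<Phi> where "\<Phi> s l = w l * ek l t s * f s" for s l
  have \<Phi>m[measurable]: "(\<lambda>x. \<Phi> (fst x) (snd x)) \<in> borel_measurable (M \<Otimes>\<^sub>M lborel)"
    unfolding \<Phi>_def by measurable
  have int\<Phi>: "integrable (M \<Otimes>\<^sub>M lborel) (case_prod \<Phi>)"
  proof (rule integrableI_bounded)
    show "case_prod \<Phi> \<in> borel_measurable (M \<Otimes>\<^sub>M lborel)" using \<Phi>m by (simp add: case_prod_beta')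
    have m2: "(\<lambda>x. ennreal (norm (case_prod \<Phi> x))) \<in> borel_measurable (M \<Otimes>\<^sub>M lborel)"
      using \<Phi>m by (simp add: case_prod_beta')
    have "(\<integral>\<^sup>+x. ennreal (norm (case_prod \<Phi> x)) \<partial>(M \<Otimes>\<^sub>M lborel)) = (\<integral>\<^sup>+s. (\<integral>\<^sup>+l. ennreal (norm (\<Phi> s l)) \<partial>lborel) \<partial>M)"
      using lborel.nn_integral_fst[OF m2] by simp
    also have "\<dots> = (\<integral>\<^sup>+s. (\<integral>\<^sup>+l. ennreal (w l * ek l t s * \<bar>f s\<bar>) \<partial>lborel) \<partial>M)"
      by (intro nn_integral_cong) (simp add: \<Phi>_def abs_mult w_nonneg ek_def)
    also have "\<dots> = ennreal (Gm / c0) * K.F f t" by (rule L1[OF fm t])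
    also have "\<dots> < \<infinity>" using Ft by (simp add: ennreal_mult_less_top)
    finally show "(\<integral>\<^sup>+x. ennreal (norm (case_prod \<Phi> x)) \<partial>(M \<Otimes>\<^sub>M lborel)) < \<infinity>" .
  qed
  have inner_m: "(\<lambda>s. c0 / Gm * (\<integral>l. \<Phi> s l \<partial>lborel)) \<in> borel_measurable M"
  proof -
    have "(\<lambda>(s, l). \<Phi> s l) \<in> borel_measurable (M \<Otimes>\<^sub>M lborel)" using \<Phi>m by (simp add: case_prod_beta')
    from lborel.borel_measurable_lebesgue_integral[OF this] show ?thesis by measurable
  qed
  have "Kop M kk f t = (\<integral>s. c0 / Gm * (\<integral>l. \<Phi> s l \<partial>lborel) \<partial>M)"
    unfolding Kop_def
  proof (rule integral_cong_AE)
    show "(\<lambda>s. kk t s * f s) \<in> borel_measurable M" by measurable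
    show "(\<lambda>s. c0 / Gm * (\<integral>l. \<Phi> s l \<partial>lborel)) \<in> borel_measurable M" by (rule inner_m)
    show "AE s in M. kk t s * f s = c0 / Gm * (\<integral>l. \<Phi> s l \<partial>lborel)"
      using AE_neq[of t]
    proof eventually_elim
      case (elim s)
      have "(\<integral>l. \<Phi> s l \<partial>lborel) = (\<integral>l. w l * ek l t s \<partial>lborel) * f s"
        unfolding \<Phi>_def by (rule integral_mult_left_zero)
      also have "\<dots> = Gm / c0 * kk t s * f s" using kk_gam_int(2)[OF elim] by simp
      finally show ?case using Gm_pos c0_pos by simp
    qed
  qed
  also have "\<dots> = c0 / Gm * (\<integral>s. (\<integral>l. \<Phi> s l \<partial>lborel) \<partial>M)" by (rule integral_mult_right_zero)
  also have "(\<integral>s. (\<integral>l. \<Phi> s l \<partial>lborel) \<partial>M) = (\<integral>l. (\<integral>s. \<Phi> s l \<partial>M) \<partial>lborel)"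
    by (rule PL.Fubini_integral[OF int\<Phi>, symmetric])
  also have "\<dots> = (\<integral>l. w l * Kop M (ek l) f t \<partial>lborel)"
  proof (rule Bochner_Integration.integral_cong[OF refl])
    fix l
    have "(\<integral>s. \<Phi> s l \<partial>M) = (\<integral>s. w l * (ek l t s * f s) \<partial>M)"
      unfolding \<Phi>_def by (simp add: mult.assoc)
    also have "\<dots> = w l * Kop M (ek l) f t" unfolding Kop_def by (rule integral_mult_right_zero)
    finally show "(\<integral>s. \<Phi> s l \<partial>M) = w l * Kop M (ek l) f t" .
  qed
  finally show ?thesis .
qed

lemma ek_meas1: "ek l t \<in> borel_measurable M"
proof -
  note id_M[measurable]
  show ?thesis unfolding ek_def by measurable
qed

lemma w_zero: "l \<le> 0 \<Longrightarrow> w l = 0"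
  by (cases "l = 0") (auto simp: w_def)

lemma psd_kk:
  assumes f: "sqi M f"
  shows "0 \<le> inn M (Kop M kk f) f"
proof -
  note fm[measurable] = sqi_meas[OF f]
  define Kek where "Kek t l = Kop M (ek l) f t" for t l
  define \<Psi> where "\<Psi> t l = w l * Kek t l * f t" for t l
  have E3[measurable]: "(\<lambda>x. ek (snd (fst x)) (fst (fst x)) (snd x)) \<in> borel_measurable ((M \<Otimes>\<^sub>M lborel) \<Otimes>\<^sub>M M)"
    by (rule meas_MlM) (unfold ek_def, measurable)
  have Kekm[measurable]: "(\<lambda>x. Kek (fst x) (snd x)) \<in> borel_measurable (M \<Otimes>\<^sub>M lborel)"
  proof -
    have "(\<lambda>(x, s). ek (snd x) (fst x) s * f s) \<in> borel_measurable ((M \<Otimes>\<^sub>M lborel) \<Otimes>\<^sub>M M)"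
      unfolding case_prod_beta by measurable
    from K.borel_measurable_lebesgue_integral[OF this] show ?thesis by (simp add: Kek_def Kop_def)
  qed
  have W[measurable]: "(\<lambda>x. w (snd x)) \<in> borel_measurable (M \<Otimes>\<^sub>M lborel)"
    by (rule meas_Ml) measurable
  have \<Psi>m[measurable]: "(\<lambda>x. \<Psi> (fst x) (snd x)) \<in> borel_measurable (M \<Otimes>\<^sub>M lborel)"
    unfolding \<Psi>_def by measurable
  have Fe_bnd: "ennreal \<bar>\<Psi> t l\<bar> \<le> ennreal \<bar>f t\<bar> * (\<integral>\<^sup>+s. ennreal (w l * ek l t s * \<bar>f s\<bar>) \<partial>M)" for t l
  proof -
    have "ennreal \<bar>\<Psi> t l\<bar> = ennreal \<bar>f t\<bar> * (ennreal (w l) * ennreal \<bar>Kek t l\<bar>)"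
      by (simp add: \<Psi>_def abs_mult w_nonneg ennreal_mult[symmetric] mult_ac)
    also have "\<dots> \<le> ennreal \<bar>f t\<bar> * (ennreal (w l) * (\<integral>\<^sup>+s. ennreal \<bar>ek l t s * f s\<bar> \<partial>M))"
      unfolding Kek_def Kop_def by (intro mult_left_mono abs_integral_le_nn) auto
    also have "ennreal (w l) * (\<integral>\<^sup>+s. ennreal \<bar>ek l t s * f s\<bar> \<partial>M) = (\<integral>\<^sup>+s. ennreal (w l) * ennreal \<bar>ek l t s * f s\<bar> \<partial>M)"
    proof (rule nn_integral_cmult[symmetric])
      note ek_meas1[of l t, measurable] fm[measurable]
      show "(\<lambda>s. ennreal \<bar>ek l t s * f s\<bar>) \<in> borel_measurable M" by measurable
    qed
    also have "\<dots> = (\<integral>\<^sup>+s. ennreal (w l * ek l t s * \<bar>f s\<bar>) \<partial>M)"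
      by (intro nn_integral_cong) (simp add: ennreal_mult[symmetric] w_nonneg abs_mult ek_def mult.assoc)
    finally show ?thesis .
  qed
  have int\<Psi>: "integrable (M \<Otimes>\<^sub>M lborel) (case_prod \<Psi>)"
  proof (rule integrableI_bounded)
    show "case_prod \<Psi> \<in> borel_measurable (M \<Otimes>\<^sub>M lborel)" using \<Psi>m by (simp add: case_prod_beta')
    have m2: "(\<lambda>x. ennreal (norm (case_prod \<Psi> x))) \<in> borel_measurable (M \<Otimes>\<^sub>M lborel)"
      using \<Psi>m by (simp add: case_prod_beta')
    have "(\<integral>\<^sup>+x. ennreal (norm (case_prod \<Psi> x)) \<partial>(M \<Otimes>\<^sub>M lborel)) = (\<integral>\<^sup>+t. (\<integral>\<^sup>+l. ennreal \<bar>\<Psi> t l\<bar> \<partial>lborel) \<partial>M)"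
      using lborel.nn_integral_fst[OF m2] by simp
    also have "\<dots> \<le> (\<integral>\<^sup>+t. ennreal \<bar>f t\<bar> * (ennreal (Gm / c0) * K.F f t) \<partial>M)"
    proof (intro nn_integral_mono)
      fix t assume t: "t \<in> space M"
      have "(\<integral>\<^sup>+l. ennreal \<bar>\<Psi> t l\<bar> \<partial>lborel) \<le> (\<integral>\<^sup>+l. ennreal \<bar>f t\<bar> * (\<integral>\<^sup>+s. ennreal (w l * ek l t s * \<bar>f s\<bar>) \<partial>M) \<partial>lborel)"
        by (intro nn_integral_mono Fe_bnd)
      also have "\<dots> = ennreal \<bar>f t\<bar> * (\<integral>\<^sup>+l. (\<integral>\<^sup>+s. ennreal (w l * ek l t s * \<bar>f s\<bar>) \<partial>M) \<partial>lborel)"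
      proof (rule nn_integral_cmult)
        have "(\<lambda>(l, s). ennreal (w l * ek l t s * \<bar>f s\<bar>)) \<in> borel_measurable (lborel \<Otimes>\<^sub>M M)"
        proof -
          have A: "(\<lambda>x. w (snd x) * ek (snd x) t (fst x)) \<in> borel_measurable (M \<Otimes>\<^sub>M lborel)"
            by (rule meas_Ml) (unfold ek_def, measurable)
          have "(\<lambda>x. ennreal (w (snd x) * ek (snd x) t (fst x) * \<bar>f (fst x)\<bar>)) \<in> borel_measurable (M \<Otimes>\<^sub>M lborel)"
            using A by measurable
          from measurable_compose[OF measurable_pair_swap' this] show ?thesis by (simp add: case_prod_beta')
        qed
        from K.borel_measurable_nn_integral[OF this]
        show "(\<lambda>l. \<integral>\<^sup>+s. ennreal (w l * ek l t s * \<bar>f s\<bar>) \<partial>M) \<in> borel_measurable lborel" .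
      qed
      also have "(\<integral>\<^sup>+l. (\<integral>\<^sup>+s. ennreal (w l * ek l t s * \<bar>f s\<bar>) \<partial>M) \<partial>lborel)
          = (\<integral>\<^sup>+s. (\<integral>\<^sup>+l. ennreal (w l * ek l t s * \<bar>f s\<bar>) \<partial>lborel) \<partial>M)"
      proof (rule PL.Fubini')
        have A: "(\<lambda>x. w (snd x) * ek (snd x) t (fst x)) \<in> borel_measurable (M \<Otimes>\<^sub>M lborel)"
          by (rule meas_Ml) (unfold ek_def, measurable)
        show "(\<lambda>(s, l). ennreal (w l * ek l t s * \<bar>f s\<bar>)) \<in> borel_measurable (M \<Otimes>\<^sub>M lborel)"
          unfolding case_prod_beta using A by measurable
      qed
      also have "\<dots> = ennreal (Gm / c0) * K.F f t" by (rule L1[OF fm t])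
      finally show "(\<integral>\<^sup>+l. ennreal \<bar>\<Psi> t l\<bar> \<partial>lborel) \<le> ennreal \<bar>f t\<bar> * (ennreal (Gm / c0) * K.F f t)" .
    qed
    also have "\<dots> = ennreal (Gm / c0) * (\<integral>\<^sup>+t. ennreal \<bar>f t\<bar> * K.F f t \<partial>M)"
      by (subst nn_integral_cmult[symmetric]) (measurable, simp add: mult_ac)
    also have "\<dots> < \<infinity>"
    proof -
      have "(\<integral>\<^sup>+t. ennreal \<bar>f t\<bar> * K.F f t \<partial>M)\<^sup>2 \<le> (\<integral>\<^sup>+t. (ennreal \<bar>f t\<bar>)\<^sup>2 \<partial>M) * (\<integral>\<^sup>+t. (K.F f t)\<^sup>2 \<partial>M)"
        by (rule Cauchy_Schwarz_nn_integral) measurable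
      also have "(\<integral>\<^sup>+t. (ennreal \<bar>f t\<bar>)\<^sup>2 \<partial>M) = ennreal ((nrm M f)\<^sup>2)"
        using K.sqi_nn[OF f] by (simp add: ennreal_power)
      also have "ennreal ((nrm M f)\<^sup>2) * (\<integral>\<^sup>+t. (K.F f t)\<^sup>2 \<partial>M) \<le> ennreal ((nrm M f)\<^sup>2) * (ennreal (Kc * Kc) * ennreal ((nrm M f)\<^sup>2))"
        using K.F_sq_int[of f] K.sqi_nn[OF f] by (intro mult_left_mono) auto
      also have "\<dots> < \<infinity>" by (simp add: ennreal_mult_less_top)
      finally have "(\<integral>\<^sup>+t. ennreal \<bar>f t\<bar> * K.F f t \<partial>M) < \<infinity>" by (simp add: power_less_top_ennreal)
      then show ?thesis by (simp add: ennreal_mult_less_top)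
    qed
    finally show "(\<integral>\<^sup>+x. ennreal (norm (case_prod \<Psi> x)) \<partial>(M \<Otimes>\<^sub>M lborel)) < \<infinity>" .
  qed
  have inner_m: "(\<lambda>t. c0 / Gm * (\<integral>l. \<Psi> t l \<partial>lborel)) \<in> borel_measurable M"
  proof -
    have "(\<lambda>(t, l). \<Psi> t l) \<in> borel_measurable (M \<Otimes>\<^sub>M lborel)" using \<Psi>m by (simp add: case_prod_beta')
    from lborel.borel_measurable_lebesgue_integral[OF this] show ?thesis by measurable
  qed
  have "inn M (Kop M kk f) f = (\<integral>t. c0 / Gm * (\<integral>l. \<Psi> t l \<partial>lborel) \<partial>M)"
    unfolding inn_def
  proof (rule integral_cong_AE)
    show "(\<lambda>t. Kop M kk f t * f t) \<in> borel_measurable M" by measurable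
    show "(\<lambda>t. c0 / Gm * (\<integral>l. \<Psi> t l \<partial>lborel)) \<in> borel_measurable M" by (rule inner_m)
    show "AE t in M. Kop M kk f t * f t = c0 / Gm * (\<integral>l. \<Psi> t l \<partial>lborel)"
      using K.F_finite_AE[OF f] AE_space
    proof eventually_elim
      case (elim t)
      have "Kop M kk f t * f t = c0 / Gm * ((\<integral>l. w l * Kek t l \<partial>lborel) * f t)"
        using step_a[OF f elim(2) elim(1)] by (simp add: Kek_def)
      also have "(\<integral>l. w l * Kek t l \<partial>lborel) * f t = (\<integral>l. \<Psi> t l \<partial>lborel)"
        unfolding \<Psi>_def by (rule integral_mult_left_zero[symmetric])
      finally show ?case by simp
    qed
  qed
  also have "\<dots> = c0 / Gm * (\<integral>t. (\<integral>l. \<Psi> t l \<partial>lborel) \<partial>M)" by (rule integral_mult_right_zero)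
  also have "(\<integral>t. (\<integral>l. \<Psi> t l \<partial>lborel) \<partial>M) = (\<integral>l. (\<integral>t. \<Psi> t l \<partial>M) \<partial>lborel)"
    by (rule PL.Fubini_integral[OF int\<Psi>, symmetric])
  also have "\<dots> = (\<integral>l. w l * inn M (Kop M (ek l) f) f \<partial>lborel)"
  proof (rule Bochner_Integration.integral_cong[OF refl])
    fix l
    have "(\<integral>t. \<Psi> t l \<partial>M) = (\<integral>t. w l * (Kek t l * f t) \<partial>M)"
      unfolding \<Psi>_def by (simp add: mult.assoc)
    also have "\<dots> = w l * inn M (Kop M (ek l) f) f" unfolding inn_def Kek_def by (rule integral_mult_right_zero)
    finally show "(\<integral>t. \<Psi> t l \<partial>M) = w l * inn M (Kop M (ek l) f) f" .
  qed
  finally have eq: "inn M (Kop M kk f) f = c0 / Gm * (\<integral>l. w l * inn M (Kop M (ek l) f) f \<partial>lborel)" .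
  have "0 \<le> (\<integral>l. w l * inn M (Kop M (ek l) f) f \<partial>lborel)"
  proof (rule Bochner_Integration.integral_nonneg)
    fix l
    show "0 \<le> w l * inn M (Kop M (ek l) f) f"
    proof (cases "0 < l")
      case True then show ?thesis using ek_psd[OF True f] w_nonneg by simp
    next
      case False then show ?thesis by (simp add: w_zero)
    qed
  qed
  then show ?thesis unfolding eq using Gm_pos c0_pos by simp
qed

end

context conc begin

interpretation K: kern M kk Kc by (rule kern_inst)
interpretation KP: kern_psd M kk Kc
  by (rule kern_psd.intro[OF kern_inst]) (unfold_locales, rule psd_kk)

lemma setD: "{0..T} \<inter> space lborel \<in> sets lborel" by simp

lemma L2space_eq: "f \<in> L2space T \<longleftrightarrow> sqi M f"
  unfolding L2space_def sqi_def M_def set_borel_measurable_def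
  by (simp add: borel_measurable_restrict_space_iff[OF setD] set_integrable_eq[OF setD])

lemma set_int_eq: fixes g :: "real \<Rightarrow> real" shows "(LINT t:{0..T}|lborel. g t) = (\<integral>t. g t \<partial>M)"
  unfolding set_lebesgue_integral_def M_def by (simp add: integral_restrict_space[OF setD])

lemma L2norm_eq: "L2norm T f = nrm M f" unfolding L2norm_def nrm_def set_int_eq ..
lemma L2inner_eq: "L2inner T f g = inn M f g" unfolding L2inner_def inn_def set_int_eq ..
lemma L2eq_eq: "L2eq T f g \<longleftrightarrow> (AE t in M. f t = g t)"
  unfolding L2eq_def M_def by (simp add: AE_restrict_space_iff[OF setD])

lemma GammaH_eq: "GammaH H T = Kop M kk"
  by (intro ext) (simp add: GammaH_def Kop_def kk_def c0_def al_def set_int_eq)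

lemma GammaT_eq: "GammaT H T = KP.Gam"
  by (intro ext) (simp add: GammaT_def KP.Gam_def GammaH_eq)

lemma opnorm_eq: "L2opnorm T (GammaH H T) = KP.opn"
proof -
  have "L2opnorm T (GammaH H T) = Sup {L2norm T (GammaH H T f) | f. f \<in> L2space T \<and> L2norm T f \<le> 1}"
    by (simp only: L2opnorm_def)
  also have "\<dots> = KP.opn" by (simp only: GammaH_eq L2norm_eq L2space_eq KP.opn_def)
  finally show ?thesis .
qed

lemma opnorm_eq': "L2opnorm T (Kop M kk) = KP.opn" using opnorm_eq by (simp add: GammaH_eq)

lemma hpartial_eq: "hpartial H T n = (\<lambda>t. \<Sum>k<n. (KP.Bop ^^ k) (\<lambda>_. 1) t / (1 + KP.c) ^ (k + 1))"
proof -
  have A: "(\<lambda>f t. L2opnorm T (GammaH H T) / 2 * f t - GammaH H T f t) = KP.Bop"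
    by (intro ext) (simp add: KP.Bop_def KP.c_def opnorm_eq' GammaH_eq)
  show ?thesis unfolding hpartial_def Let_def A by (simp add: KP.c_def opnorm_eq)
qed

lemma main:
  shows "(\<exists>C. \<forall>f\<in>L2space T. GammaH H T f \<in> L2space T \<and>
                 L2norm T (GammaH H T f) \<le> C * L2norm T f)
       \<and> (\<forall>f\<in>L2space T. \<forall>g\<in>L2space T.
                 L2inner T (GammaH H T f) g = L2inner T f (GammaH H T g))
       \<and> (\<forall>f\<in>L2space T. L2inner T (GammaH H T f) f \<ge> 0)
       \<and> (\<forall>g\<in>L2space T. \<exists>f\<in>L2space T. L2eq T (GammaT H T f) g)
       \<and> (\<forall>f1\<in>L2space T. \<forall>f2\<in>L2space T.
                 L2eq T (GammaT H T f1) (GammaT H T f2) \<longrightarrow> L2eq T f1 f2)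
       \<and> (\<exists>C. \<forall>f\<in>L2space T. L2norm T f \<le> C * L2norm T (GammaT H T f))
       \<and> (\<exists>h\<in>L2space T. L2eq T (GammaT H T h) (\<lambda>_. 1)
              \<and> (\<forall>n. hpartial H T n \<in> L2space T)
              \<and> (\<lambda>n. L2norm T (\<lambda>t. hpartial H T n t - h t)) \<longlonglongrightarrow> 0)"
proof (intro conjI)
  show "\<exists>C. \<forall>f\<in>L2space T. GammaH H T f \<in> L2space T \<and> L2norm T (GammaH H T f) \<le> C * L2norm T f"
    by (rule exI[of _ Kc]) (auto simp: L2space_eq L2norm_eq GammaH_eq K.Kop_sqi)
  show "\<forall>f\<in>L2space T. \<forall>g\<in>L2space T. L2inner T (GammaH H T f) g = L2inner T f (GammaH H T g)"
    by (auto simp: L2space_eq L2inner_eq GammaH_eq K.self_adjoint)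
  show "\<forall>f\<in>L2space T. L2inner T (GammaH H T f) f \<ge> 0"
    by (auto simp: L2space_eq L2inner_eq GammaH_eq psd_kk)
  show "\<forall>g\<in>L2space T. \<exists>f\<in>L2space T. L2eq T (GammaT H T f) g"
  proof
    fix g assume "g \<in> L2space T"
    then have g: "sqi M g" by (simp add: L2space_eq)
    from KP.neumann[OF g] obtain h where "sqi M h" "AE t in M. KP.Gam h t = g t" by blast
    then show "\<exists>f\<in>L2space T. L2eq T (GammaT H T f) g" by (auto simp: L2space_eq L2eq_eq GammaT_eq)
  qed
  show "\<forall>f1\<in>L2space T. \<forall>f2\<in>L2space T. L2eq T (GammaT H T f1) (GammaT H T f2) \<longrightarrow> L2eq T f1 f2"
  proof (intro ballI impI)
    fix f1 f2 assume "f1 \<in> L2space T" "f2 \<in> L2space T" "L2eq T (GammaT H T f1) (GammaT H T f2)"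
    then show "L2eq T f1 f2" using KP.Gam_inj[of f1 f2] by (simp add: L2space_eq L2eq_eq GammaT_eq)
  qed
  show "\<exists>C. \<forall>f\<in>L2space T. L2norm T f \<le> C * L2norm T (GammaT H T f)"
    by (rule exI[of _ 1]) (auto simp: L2space_eq L2norm_eq GammaT_eq KP.Gam_lower)
  show "\<exists>h\<in>L2space T. L2eq T (GammaT H T h) (\<lambda>_. 1) \<and> (\<forall>n. hpartial H T n \<in> L2space T)
              \<and> (\<lambda>n. L2norm T (\<lambda>t. hpartial H T n t - h t)) \<longlonglongrightarrow> 0"
  proof -
    have one: "sqi M (\<lambda>_. 1)" by (rule K.sqi_const)
    from KP.neumann[OF one] obtain h where h: "sqi M h" "AE t in M. KP.Gam h t = 1"
      "(\<lambda>n. nrm M (\<lambda>t. (\<Sum>k<n. (KP.Bop ^^ k) (\<lambda>_. 1) t / (1 + KP.c) ^ (k + 1)) - h t)) \<longlonglongrightarrow> 0"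
      by blast
    have hp: "sqi M (hpartial H T n)" for n
      unfolding hpartial_eq by (intro sqi_sum sqi_divide KP.P_sqi[OF one])
    show ?thesis
      using h hp by (auto simp: L2space_eq L2eq_eq L2norm_eq GammaT_eq hpartial_eq)
  qed
qed

end

theorem mainTheorem16:
  fixes H T :: real
  assumes "1/2 < H" and "H < 1" and "0 < T"
  shows "(\<exists>C. \<forall>f\<in>L2space T. GammaH H T f \<in> L2space T \<and>
                 L2norm T (GammaH H T f) \<le> C * L2norm T f)
       \<and> (\<forall>f\<in>L2space T. \<forall>g\<in>L2space T.
                 L2inner T (GammaH H T f) g = L2inner T f (GammaH H T g))
       \<and> (\<forall>f\<in>L2space T. L2inner T (GammaH H T f) f \<ge> 0)
       \<and> (\<forall>g\<in>L2space T. \<exists>f\<in>L2space T. L2eq T (GammaT H T f) g)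
       \<and> (\<forall>f1\<in>L2space T. \<forall>f2\<in>L2space T.
                 L2eq T (GammaT H T f1) (GammaT H T f2) \<longrightarrow> L2eq T f1 f2)
       \<and> (\<exists>C. \<forall>f\<in>L2space T. L2norm T f \<le> C * L2norm T (GammaT H T f))
       \<and> (\<exists>h\<in>L2space T. L2eq T (GammaT H T h) (\<lambda>_. 1)
              \<and> (\<forall>n. hpartial H T n \<in> L2space T)
              \<and> (\<lambda>n. L2norm T (\<lambda>t. hpartial H T n t - h t)) \<longlonglongrightarrow> 0)"
proof -
  interpret conc H T using assms by unfold_locales
  show ?thesis by (rule main)
qed


end
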